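(* Let $G \ne K_4$ be a connected, claw-free, cubic graph with $u(G)$ units. Then $\sigma_{(2,3)}(G) = u(G)+1$ if $G$ is a diamond-necklace $N_k$ for some $k\ge 2$, and $\sigma_{(2,3)}(G) = u(G)$ otherwise.
   Context: A graph is claw-free if it has no induced subgraph isomorphic to $K_{1,3}$; it is cubic if every vertex has degree $3$. A diamond is an induced subgraph isomorphic to $K_4$ minus one edge. For a connected, claw-free, cubic graph $G\neq K_4$, the vertex set $V(G)$ can be uniquely partitioned into sets each of which induces a triangle or a diamond in $G$; the parts are called units, and $u(G)$ is the number of units. Diamond-necklace: for $k\ge 2$, take $k$ disjoint diamonds $D_1,\dots,D_k$ with $V(D_i)=\{a_i,b_i,c_i,d_i\}$ where $a_ib_i$ is the missing edge, and add the edges $a_ib_{i+1}$ for $i\in\{1,\dots,k-1\}$ and the edge $a_kb_1$; the result is $N_k$. $(p,q)$-spreading: let $p\in\mathbb{N}$ and $q\in\mathbb{N}\cup\{\infty\}$. Start with a set $S\subseteq V(G)$ of blue vertices, all other vertices white. The color change rule: if a white vertex $w$ has at least $p$ blue neighbors, and at least one of the blue neighbors of $w$ has at most $q$ white neighbors, then $w$ is recolored blue. $S$ is a $(p,q)$-spreading set if repeatedly applying this rule eventually colors all vertices blue. $\sigma_{(p,q)}(G)$ is the minimum cardinality of a $(p,q)$-spreading set of $G$. *)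

theory Defs
  imports Main "HOL-Library.Extended_Nat"
begin

definition simple_graph :: "'a set \<Rightarrow> ('a \<Rightarrow> 'a \<Rightarrow> bool) \<Rightarrow> bool" where
  "simple_graph V E \<longleftrightarrow> finite V \<and> (\<forall>x y. E x y \<longrightarrow> x \<in> V \<and> y \<in> V)
     \<and> (\<forall>x y. E x y \<longrightarrow> E y x) \<and> (\<forall>x. \<not> E x x)"

definition nbrs :: "('a \<Rightarrow> 'a \<Rightarrow> bool) \<Rightarrow> 'a \<Rightarrow> 'a set" where
  "nbrs E x = {y. E x y}"

definition cubic :: "'a set \<Rightarrow> ('a \<Rightarrow> 'a \<Rightarrow> bool) \<Rightarrow> bool" where
  "cubic V E \<longleftrightarrow> (\<forall>v\<in>V. card (nbrs E v) = 3)"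

definition connected_graph :: "'a set \<Rightarrow> ('a \<Rightarrow> 'a \<Rightarrow> bool) \<Rightarrow> bool" where
  "connected_graph V E \<longleftrightarrow> V \<noteq> {} \<and> (\<forall>x\<in>V. \<forall>y\<in>V. E\<^sup>*\<^sup>* x y)"

definition claw_free :: "'a set \<Rightarrow> ('a \<Rightarrow> 'a \<Rightarrow> bool) \<Rightarrow> bool" where
  "claw_free V E \<longleftrightarrow> \<not> (\<exists>v\<in>V. \<exists>a b c. E v a \<and> E v b \<and> E v c \<and> a \<noteq> b \<and> a \<noteq> c \<and> b \<noteq> c
        \<and> \<not> E a b \<and> \<not> E a c \<and> \<not> E b c)"

definition graph_iso :: "'a set \<Rightarrow> ('a \<Rightarrow> 'a \<Rightarrow> bool) \<Rightarrow> 'b set \<Rightarrow> ('b \<Rightarrow> 'b \<Rightarrow> bool) \<Rightarrow> bool" where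
  "graph_iso V E W F \<longleftrightarrow> (\<exists>f. bij_betw f V W \<and> (\<forall>x\<in>V. \<forall>y\<in>V. E x y \<longleftrightarrow> F (f x) (f y)))"

definition K4_V :: "nat set" where "K4_V = {0..<4}"
definition K4_E :: "nat \<Rightarrow> nat \<Rightarrow> bool" where "K4_E x y \<longleftrightarrow> x \<in> K4_V \<and> y \<in> K4_V \<and> x \<noteq> y"

definition is_triangle :: "('a \<Rightarrow> 'a \<Rightarrow> bool) \<Rightarrow> 'a set \<Rightarrow> bool" where
  "is_triangle E U \<longleftrightarrow> card U = 3 \<and> (\<forall>x\<in>U. \<forall>y\<in>U. x \<noteq> y \<longrightarrow> E x y)"

definition is_diamond :: "('a \<Rightarrow> 'a \<Rightarrow> bool) \<Rightarrow> 'a set \<Rightarrow> bool" where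
  "is_diamond E U \<longleftrightarrow> (\<exists>a b c d. U = {a, b, c, d} \<and> distinct [a, b, c, d] \<and> \<not> E a b
      \<and> E a c \<and> E a d \<and> E b c \<and> E b d \<and> E c d)"

definition unit_partition :: "'a set \<Rightarrow> ('a \<Rightarrow> 'a \<Rightarrow> bool) \<Rightarrow> 'a set set \<Rightarrow> bool" where
  "unit_partition V E P \<longleftrightarrow> \<Union>P = V \<and> (\<forall>U\<in>P. \<forall>U'\<in>P. U \<noteq> U' \<longrightarrow> U \<inter> U' = {})
      \<and> (\<forall>U\<in>P. is_triangle E U \<or> is_diamond E U)"

text \<open>u(G): number of units of the (unique) unit partition.\<close>
definition num_units :: "'a set \<Rightarrow> ('a \<Rightarrow> 'a \<Rightarrow> bool) \<Rightarrow> nat" where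
  "num_units V E = card (THE P. unit_partition V E P)"

text \<open>Diamond necklace N_k: vertex (i,j), i<k, j=0,1,2,3 for a_i,b_i,c_i,d_i.\<close>
definition necklace_V :: "nat \<Rightarrow> (nat \<times> nat) set" where
  "necklace_V k = {0..<k} \<times> {0..<4}"

definition necklace_E :: "nat \<Rightarrow> nat \<times> nat \<Rightarrow> nat \<times> nat \<Rightarrow> bool" where
  "necklace_E k x y \<longleftrightarrow> x \<in> necklace_V k \<and> y \<in> necklace_V k \<and>
     ((fst x = fst y \<and> snd x \<noteq> snd y \<and> {snd x, snd y} \<noteq> {0, 1})
      \<or> (snd x = 0 \<and> snd y = 1 \<and> fst y = Suc (fst x) mod k)
      \<or> (snd y = 0 \<and> snd x = 1 \<and> fst x = Suc (fst y) mod k))"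

text \<open>One round of the (p,q) colour change rule applied to the blue set B.\<close>
definition spread_step :: "'a set \<Rightarrow> ('a \<Rightarrow> 'a \<Rightarrow> bool) \<Rightarrow> nat \<Rightarrow> enat \<Rightarrow> 'a set \<Rightarrow> 'a set" where
  "spread_step V E p q B = B \<union> {w \<in> V - B. card (nbrs E w \<inter> B) \<ge> p \<and>
      (\<exists>x \<in> nbrs E w \<inter> B. enat (card (nbrs E x - B)) \<le> q)}"

definition spreading_set :: "'a set \<Rightarrow> ('a \<Rightarrow> 'a \<Rightarrow> bool) \<Rightarrow> nat \<Rightarrow> enat \<Rightarrow> 'a set \<Rightarrow> bool" where
  "spreading_set V E p q S \<longleftrightarrow> S \<subseteq> V \<and> (\<exists>n. (spread_step V E p q ^^ n) S = V)"

definition sigma :: "'a set \<Rightarrow> ('a \<Rightarrow> 'a \<Rightarrow> bool) \<Rightarrow> nat \<Rightarrow> enat \<Rightarrow> nat" where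
  "sigma V E p q = (LEAST n. \<exists>S. spreading_set V E p q S \<and> card S = n)"

end

theory Submission
  imports Defs
begin

locale cg =
  fixes V :: "'a set" and E :: "'a \<Rightarrow> 'a \<Rightarrow> bool"
  assumes sg: "simple_graph V E" and conn: "connected_graph V E" and cf: "claw_free V E"
    and cub: "cubic V E" and nk4: "\<not> graph_iso V E K4_V K4_E"
begin

lemma finV: "finite V" using sg by (simp add: simple_graph_def)
lemma EV1: "E x y \<Longrightarrow> x \<in> V" using sg by (simp add: simple_graph_def)
lemma EV2: "E x y \<Longrightarrow> y \<in> V" using sg by (simp add: simple_graph_def)
lemma Esym: "E x y \<Longrightarrow> E y x" using sg by (simp add: simple_graph_def)
lemma Eirr: "\<not> E x x" using sg by (simp add: simple_graph_def)
lemma Ene: "E x y \<Longrightarrow> x \<noteq> y" using Eirr by auto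

lemma nbrs_sub: "nbrs E v \<subseteq> V" using EV2 by (auto simp: nbrs_def)
lemma nbrs_fin: "finite (nbrs E v)" using nbrs_sub finV finite_subset by blast
lemma nbrs_card: "v \<in> V \<Longrightarrow> card (nbrs E v) = 3" using cub by (simp add: cubic_def)

lemma nbrs3: assumes "v \<in> V" obtains p q r where "p \<noteq> q" "q \<noteq> r" "p \<noteq> r" "nbrs E v = {p,q,r}"
  using nbrs_card[OF assms] by (auto simp: card_3_iff)

lemma no4: assumes "E v a" "E v b" "E v c" "E v d" "a \<noteq> b" "a \<noteq> c" "a \<noteq> d" "b \<noteq> c" "b \<noteq> d" "c \<noteq> d"
  shows False
proof -
  have "{a,b,c,d} \<subseteq> nbrs E v" using assms by (auto simp: nbrs_def)
  hence "card {a,b,c,d} \<le> card (nbrs E v)" using nbrs_fin card_mono by blast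
  moreover have "card {a,b,c,d} = 4" using assms by auto
  moreover have "card (nbrs E v) = 3" using nbrs_card EV1 assms(1) by blast
  ultimately show False by simp
qed

lemma all3: assumes "E v a" "E v b" "E v c" "a \<noteq> b" "a \<noteq> c" "b \<noteq> c" "E v y"
  shows "y = a \<or> y = b \<or> y = c"
  using no4[OF assms(1-3,7)] assms by blast

lemma nbrs_eq3: assumes "E v a" "E v b" "E v c" "a \<noteq> b" "a \<noteq> c" "b \<noteq> c"
  shows "nbrs E v = {a,b,c}"
  using all3[OF assms] assms by (auto simp: nbrs_def)

lemma third: assumes "E v a" "E v b" "a \<noteq> b"
  obtains c where "E v c" "c \<noteq> a" "c \<noteq> b"
proof -
  obtain p q r where "p \<noteq> q" "q \<noteq> r" "p \<noteq> r" and N: "nbrs E v = {p,q,r}" using nbrs3 EV1 assms(1) by metis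
  have "a \<in> {p,q,r}" "b \<in> {p,q,r}" using assms N by (auto simp: nbrs_def set_eq_iff)
  hence "\<exists>c\<in>{p,q,r}. c \<noteq> a \<and> c \<noteq> b" using \<open>p \<noteq> q\<close> \<open>q \<noteq> r\<close> \<open>p \<noteq> r\<close> by auto
  then obtain c where "c \<in> nbrs E v" "c \<noteq> a" "c \<noteq> b" using N by auto
  thus ?thesis using that by (auto simp: nbrs_def)
qed

lemma reach_closed:
  assumes "E\<^sup>*\<^sup>* x y" "x \<in> K" "\<And>a b. a \<in> K \<Longrightarrow> E a b \<Longrightarrow> b \<in> K" shows "y \<in> K"
  using assms(1) by (induction rule: rtranclp_induct) (use assms in auto)

lemma conn_all: "x \<in> V \<Longrightarrow> y \<in> V \<Longrightarrow> E\<^sup>*\<^sup>* x y" using conn by (simp add: connected_graph_def)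
lemma Vne: "V \<noteq> {}" using conn by (simp add: connected_graph_def)

lemma closed_all: assumes "x \<in> K" "x \<in> V" "\<And>a b. a \<in> K \<Longrightarrow> E a b \<Longrightarrow> b \<in> K" shows "V \<subseteq> K"
  using reach_closed conn_all assms by blast

lemma K4_contra:
  assumes "E a b" "E a c" "E a d" "E b c" "E b d" "E c d"
  shows False
proof -
  have d: "a \<noteq> b" "a \<noteq> c" "a \<noteq> d" "b \<noteq> c" "b \<noteq> d" "c \<noteq> d" using assms Ene by auto
  have s: "E b a" "E c a" "E d a" "E c b" "E d b" "E d c" using assms Esym by auto
  let ?K = "{a,b,c,d}"
  have cl: "\<And>x y. x \<in> ?K \<Longrightarrow> E x y \<Longrightarrow> y \<in> ?K"
  proof -
    fix x y assume "x \<in> ?K" "E x y"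
    then consider "x = a" | "x = b" | "x = c" | "x = d" by blast
    thus "y \<in> ?K"
    proof cases
      case 1 thus ?thesis using all3[of a b c d y] assms d \<open>E x y\<close> by auto
    next
      case 2 thus ?thesis using all3[of b a c d y] assms d \<open>E x y\<close> s by auto
    next
      case 3 thus ?thesis using all3[of c a b d y] assms d \<open>E x y\<close> s by auto
    next
      case 4 thus ?thesis using all3[of d a b c y] assms d \<open>E x y\<close> s by auto
    qed
  qed
  have "V \<subseteq> ?K" using closed_all[of a ?K] cl EV1[OF assms(1)] by blast
  moreover have "?K \<subseteq> V" using EV1[OF assms(1)] EV2[OF assms(1)] EV2[OF assms(2)] EV2[OF assms(3)] by blast
  ultimately have VK: "V = ?K" by blast
  define f where "f v = (if v = a then 0 else if v = b then 1 else if v = c then 2 else (3::nat))" for v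
  have "bij_betw f V K4_V"
    unfolding bij_betw_def inj_on_def VK K4_V_def using d by (auto simp: f_def)
  moreover have "\<forall>x\<in>V. \<forall>y\<in>V. E x y \<longleftrightarrow> K4_E (f x) (f y)"
    unfolding VK K4_E_def K4_V_def using d assms s Eirr by (auto simp: f_def)
  ultimately show False using nk4 unfolding graph_iso_def by blast
qed

definition unitc :: "'a set \<Rightarrow> bool" where
  "unitc U \<longleftrightarrow> U \<subseteq> V \<and> (is_diamond E U \<or> (is_triangle E U \<and> \<not>(\<exists>D. is_diamond E D \<and> U \<subseteq> D)))"

definition PP :: "'a set set" where "PP = {U. unitc U}"

lemma tri_obtain: assumes "is_triangle E U"
  obtains x y z where "U = {x,y,z}" "x \<noteq> y" "x \<noteq> z" "y \<noteq> z" "E x y" "E x z" "E y z"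
proof -
  obtain x y z where "U = {x,y,z}" "x \<noteq> y" "y \<noteq> z" "x \<noteq> z" using assms by (auto simp: is_triangle_def card_3_iff)
  moreover hence "E x y" "E x z" "E y z" using assms by (auto simp: is_triangle_def)
  ultimately show ?thesis using that by blast
qed

lemma dia_obtain: assumes "is_diamond E U"
  obtains a b c d where "U = {a,b,c,d}" "a \<noteq> b" "a \<noteq> c" "a \<noteq> d" "b \<noteq> c" "b \<noteq> d" "c \<noteq> d"
    "\<not> E a b" "E a c" "E a d" "E b c" "E b d" "E c d"
  using assms that by (auto simp: is_diamond_def)

lemma not_both: "is_triangle E U \<Longrightarrow> \<not> is_diamond E U"
  by (auto simp: is_triangle_def is_diamond_def)

lemma two_in: assumes "is_triangle E U \<or> is_diamond E U" "x \<in> U"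
  shows "\<exists>y z. y \<noteq> z \<and> y \<in> U \<and> z \<in> U \<and> E x y \<and> E x z"
  using assms(1)
proof
  assume "is_triangle E U"
  then obtain a b c where U: "U = {a,b,c}" "a \<noteq> b" "a \<noteq> c" "b \<noteq> c" "E a b" "E a c" "E b c" by (rule tri_obtain)
  have "E b a" "E c a" "E c b" using U Esym by auto
  thus ?thesis using U assms(2) by blast
next
  assume "is_diamond E U"
  then obtain a b c d where U: "U = {a,b,c,d}" "a \<noteq> b" "a \<noteq> c" "a \<noteq> d" "b \<noteq> c" "b \<noteq> d" "c \<noteq> d"
    "\<not> E a b" "E a c" "E a d" "E b c" "E b d" "E c d" by (rule dia_obtain)
  have "E c a" "E d a" "E c b" "E d b" "E d c" using U Esym by auto
  thus ?thesis using U assms(2) by blast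
qed

lemma unitc_sub: "unitc U \<Longrightarrow> U \<subseteq> V" by (simp add: unitc_def)
lemma unitc_td: "unitc U \<Longrightarrow> is_triangle E U \<or> is_diamond E U" by (auto simp: unitc_def)

lemma K1: assumes "unitc U" "x \<in> U" "E x y" "E x y'" "y \<notin> U" "y' \<notin> U" shows "y = y'"
proof (rule ccontr)
  assume "y \<noteq> y'"
  obtain p q where "p \<noteq> q" "p \<in> U" "q \<in> U" "E x p" "E x q" using two_in[OF unitc_td[OF assms(1)] assms(2)] by blast
  thus False using no4[of x p q y y'] assms \<open>y \<noteq> y'\<close> by blast
qed

lemma tri_ext_dia:
  assumes "E p q" "E p r" "E q r" "p \<noteq> q" "p \<noteq> r" "q \<noteq> r" "y \<notin> {p,q,r}" "E y p" "E y q"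
  shows "is_diamond E {r,y,p,q}"
proof -
  have "\<not> E y r"
  proof
    assume "E y r"
    thus False using K4_contra[of y p q r] assms by blast
  qed
  hence "\<not> E r y" using Esym by blast
  moreover have "E r p" "E r q" using assms Esym by auto
  ultimately show ?thesis unfolding is_diamond_def using assms
    by (rule_tac x=r in exI, rule_tac x=y in exI, rule_tac x=p in exI, rule_tac x=q in exI) auto
qed

lemma K2: assumes "unitc U" "y \<in> V" "y \<notin> U" "E y p" "E y q" "p \<in> U" "q \<in> U" shows "p = q"
proof (rule ccontr)
  assume pq: "p \<noteq> q"
  from unitc_td[OF assms(1)] show False
  proof
    assume T: "is_triangle E U"
    then obtain a b c where U: "U = {a,b,c}" "a \<noteq> b" "a \<noteq> c" "b \<noteq> c" "E a b" "E a c" "E b c" by (rule tri_obtain)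
    have "\<exists>r\<in>U. r \<noteq> p \<and> r \<noteq> q" using U pq assms(6,7) by auto
    then obtain r where r: "r \<in> U" "r \<noteq> p" "r \<noteq> q" by blast
    have U': "U = {p,q,r}" using U r assms(6,7) pq by auto
    have adj: "\<And>s t. s \<in> U \<Longrightarrow> t \<in> U \<Longrightarrow> s \<noteq> t \<Longrightarrow> E s t" using T by (auto simp: is_triangle_def)
    have "is_diamond E {r,y,p,q}"
      using tri_ext_dia[of p q r y] adj assms r pq U' by auto
    moreover have "U \<subseteq> {r,y,p,q}" using U' by auto
    ultimately show False using assms(1) T not_both by (auto simp: unitc_def)
  next
    assume "is_diamond E U"
    then obtain a b c d where U: "U = {a,b,c,d}" "a \<noteq> b" "a \<noteq> c" "a \<noteq> d" "b \<noteq> c" "b \<noteq> d" "c \<noteq> d"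
      "\<not> E a b" "E a c" "E a d" "E b c" "E b d" "E c d" by (rule dia_obtain)
    have s: "E c a" "E d a" "E c b" "E d b" "E d c" using U Esym by auto
    have "\<not> E y c" using all3[of c a b d y] s U assms(3) Esym by blast
    moreover have "\<not> E y d" using all3[of d a b c y] s U assms(3) Esym by blast
    ultimately have ab: "E y a" "E y b" using assms pq U by auto
    obtain t where t: "E y t" "t \<noteq> a" "t \<noteq> b" using third[OF ab U(2)] by blast
    have ya: "E a y" "E b y" using ab Esym by auto
    have "\<not> E a t"
    proof
      assume "E a t"
      hence "t = c \<or> t = d \<or> t = y" using all3[of a c d y t] U ya assms(3) by auto
      moreover have "t \<noteq> y" using t Ene by blast
      moreover have "\<not> E t y" if "t = c \<or> t = d" using all3[of c a b d y] all3[of d a b c y] s U assms(3) that by blast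
      ultimately show False using t Esym by blast
    qed
    moreover have "\<not> E b t"
    proof
      assume "E b t"
      hence "t = c \<or> t = d \<or> t = y" using all3[of b c d y t] U ya assms(3) by auto
      moreover have "t \<noteq> y" using t Ene by blast
      moreover have "\<not> E t y" if "t = c \<or> t = d" using all3[of c a b d y] all3[of d a b c y] s U assms(3) that by blast
      ultimately show False using t Esym by blast
    qed
    ultimately show False using cf assms(2) ab t U unfolding claw_free_def by blast
  qed
qed

lemma nomatch_dia:
  assumes U: "U = {a,b,c,d}" "a \<noteq> b" "a \<noteq> c" "a \<noteq> d" "b \<noteq> c" "b \<noteq> d" "c \<noteq> d"
    "E a c" "E a d" "E b c" "E b d" "E c d"
   and s: "E c a" "E d a" "E c b" "E d b" "E d c" and  "x0 \<in> U" "x0 \<in> X" "z0 \<in> U" "z0 \<notin> X"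
  shows "(\<exists>a\<in>U. a \<in> X \<and> (\<exists>b c. b \<noteq> c \<and> b \<in> U \<and> b \<notin> X \<and> c \<in> U \<and> c \<notin> X \<and> E a b \<and> E a c))
       \<or> (\<exists>b\<in>U. b \<notin> X \<and> (\<exists>a a'. a \<noteq> a' \<and> a \<in> U \<and> a \<in> X \<and> a' \<in> U \<and> a' \<in> X \<and> E b a \<and> E b a'))"
proof -
  have P1: "\<And>v p q. v \<in> U \<Longrightarrow> v \<in> X \<Longrightarrow> p \<noteq> q \<Longrightarrow> p \<in> U \<Longrightarrow> p \<notin> X \<Longrightarrow> q \<in> U \<Longrightarrow> q \<notin> X \<Longrightarrow> E v p \<Longrightarrow> E v q \<Longrightarrow> ?thesis" by blast
  have P2: "\<And>v p q. v \<in> U \<Longrightarrow> v \<notin> X \<Longrightarrow> p \<noteq> q \<Longrightarrow> p \<in> U \<Longrightarrow> p \<in> X \<Longrightarrow> q \<in> U \<Longrightarrow> q \<in> X \<Longrightarrow> E v p \<Longrightarrow> E v q \<Longrightarrow> ?thesis" by blast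
  have inU: "a \<in> U" "b \<in> U" "c \<in> U" "d \<in> U" using U by auto
  show ?thesis
  proof (cases "c \<in> X")
    case cX: True
    show ?thesis
    proof (cases "d \<in> X")
      case dX: True
      have "a \<notin> X \<or> b \<notin> X" using U assms(20,21) cX dX by auto
      thus ?thesis using P2[OF inU(1) _ U(7) inU(3) cX inU(4) dX U(8,9)] P2[OF inU(2) _ U(7) inU(3) cX inU(4) dX U(10,11)] by blast
    next
      case dN: False
      show ?thesis
      proof (cases "a \<in> X")
        case True
        show ?thesis
        proof (cases "b \<in> X")
          case True thus ?thesis using P2[OF inU(4) dN U(2) inU(1) \<open>a \<in> X\<close> inU(2) _ s(2,4)] by blast
        next
          case False thus ?thesis using P1[OF inU(3) cX _ inU(2) False inU(4) dN s(3) U(12)] U by blast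
        qed
      next
        case False thus ?thesis using P1[OF inU(3) cX _ inU(1) False inU(4) dN s(1) U(12)] U by blast
      qed
    qed
  next
    case cN: False
    show ?thesis
    proof (cases "d \<in> X")
      case dX: True
      show ?thesis
      proof (cases "a \<in> X")
        case True
        show ?thesis
        proof (cases "b \<in> X")
          case True thus ?thesis using P2[OF inU(3) cN U(2) inU(1) \<open>a \<in> X\<close> inU(2) _ s(1,3)] by blast
        next
          case False thus ?thesis using P1[OF inU(4) dX _ inU(2) False inU(3) cN s(4) s(5)] U by blast
        qed
      next
        case False thus ?thesis using P1[OF inU(4) dX _ inU(1) False inU(3) cN s(2) s(5)] U by blast
      qed
    next
      case dN: False
      have "a \<in> X \<or> b \<in> X" using U assms(18,19) cN dN by auto
      thus ?thesis using P1[OF inU(1) _ U(7) inU(3) cN inU(4) dN U(8,9)] P1[OF inU(2) _ U(7) inU(3) cN inU(4) dN U(10,11)] by blast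
    qed
  qed
qed

lemma nomatch:
  assumes "is_triangle E U \<or> is_diamond E U" "x0 \<in> U" "x0 \<in> X" "z0 \<in> U" "z0 \<notin> X"
  shows "(\<exists>a\<in>U. a \<in> X \<and> (\<exists>b c. b \<noteq> c \<and> b \<in> U \<and> b \<notin> X \<and> c \<in> U \<and> c \<notin> X \<and> E a b \<and> E a c))
       \<or> (\<exists>b\<in>U. b \<notin> X \<and> (\<exists>a a'. a \<noteq> a' \<and> a \<in> U \<and> a \<in> X \<and> a' \<in> U \<and> a' \<in> X \<and> E b a \<and> E b a'))"
  using assms(1)
proof
  assume "is_triangle E U"
  then obtain a b c where U: "U = {a,b,c}" "a \<noteq> b" "a \<noteq> c" "b \<noteq> c" "E a b" "E a c" "E b c" by (rule tri_obtain)
  have s: "E b a" "E c a" "E c b" using U Esym by auto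
  show ?thesis using U s assms(2-5)
    by (cases "a \<in> X"; cases "b \<in> X"; cases "c \<in> X") (simp; blast)+
next
  assume "is_diamond E U"
  then obtain a b c d where U: "U = {a,b,c,d}" "a \<noteq> b" "a \<noteq> c" "a \<noteq> d" "b \<noteq> c" "b \<noteq> d" "c \<noteq> d"
    "\<not> E a b" "E a c" "E a d" "E b c" "E b d" "E c d" by (rule dia_obtain)
  have s: "E c a" "E d a" "E c b" "E d b" "E d c" using U Esym by auto
  show ?thesis using nomatch_dia[OF U(1-7) U(9-13) s assms(2-5)] .
qed

lemma unit_sub: assumes "unitc U1" "unitc U2" "v \<in> U1" "v \<in> U2" shows "U2 \<subseteq> U1"
proof (rule ccontr)
  assume "\<not> U2 \<subseteq> U1"
  then obtain z where z: "z \<in> U2" "z \<notin> U1" by blast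
  from nomatch[OF unitc_td[OF assms(2)] assms(4) assms(3) z]
  show False
  proof
    assume "\<exists>a\<in>U2. a \<in> U1 \<and> (\<exists>b c. b \<noteq> c \<and> b \<in> U2 \<and> b \<notin> U1 \<and> c \<in> U2 \<and> c \<notin> U1 \<and> E a b \<and> E a c)"
    thus False using K1[OF assms(1)] by blast
  next
    assume "\<exists>b\<in>U2. b \<notin> U1 \<and> (\<exists>a a'. a \<noteq> a' \<and> a \<in> U2 \<and> a \<in> U1 \<and> a' \<in> U2 \<and> a' \<in> U1 \<and> E b a \<and> E b a')"
    then obtain b a a' where "b \<in> U2" "b \<notin> U1" "a \<noteq> a'" "a \<in> U1" "a' \<in> U1" "E b a" "E b a'" by blast
    moreover have "b \<in> V" using \<open>b \<in> U2\<close> unitc_sub[OF assms(2)] by blast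
    ultimately show False using K2[OF assms(1)] by blast
  qed
qed

lemma unit_eq: "unitc U1 \<Longrightarrow> unitc U2 \<Longrightarrow> v \<in> U1 \<Longrightarrow> v \<in> U2 \<Longrightarrow> U1 = U2"
  using unit_sub by blast

lemma cover: assumes "v \<in> V" shows "\<exists>U. unitc U \<and> v \<in> U"
proof -
  obtain p q r where pqr: "p \<noteq> q" "q \<noteq> r" "p \<noteq> r" and N: "nbrs E v = {p,q,r}" using nbrs3[OF assms] by metis
  have e: "E v p" "E v q" "E v r" using N by (auto simp: nbrs_def set_eq_iff)
  have "E p q \<or> E p r \<or> E q r"
    using cf assms e pqr unfolding claw_free_def by blast
  then obtain s t where st: "E v s" "E v t" "E s t" "s \<noteq> t" using e pqr by blast
  let ?T = "{v,s,t}"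
  have T: "is_triangle E ?T"
    using st Ene Esym unfolding is_triangle_def by (auto simp: card_insert_if)
  have TV: "?T \<subseteq> V" using st assms EV2 by blast
  show ?thesis
  proof (cases "\<exists>D. is_diamond E D \<and> ?T \<subseteq> D")
    case True
    then obtain D where D: "is_diamond E D" "?T \<subseteq> D" by blast
    have "D \<subseteq> V" using D(1) EV1 EV2 unfolding is_diamond_def by blast
    thus ?thesis using D unfolding unitc_def by blast
  next
    case False thus ?thesis using T TV unfolding unitc_def by blast
  qed
qed

lemma PP_part: "unit_partition V E PP"
  unfolding unit_partition_def PP_def
  using cover unitc_sub unit_eq unitc_td by blast

lemma PP_uniq: assumes "unit_partition V E Q" shows "Q = PP"
proof -
  have QU: "\<Union>Q = V" and Qd: "\<And>U U'. U \<in> Q \<Longrightarrow> U' \<in> Q \<Longrightarrow> U \<noteq> U' \<Longrightarrow> U \<inter> U' = {}"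
    and Qt: "\<And>U. U \<in> Q \<Longrightarrow> is_triangle E U \<or> is_diamond E U"
    using assms unfolding unit_partition_def by blast+
  have QP: "unitc U" if U: "U \<in> Q" for U
  proof -
    have UV: "U \<subseteq> V" using QU U by blast
    show ?thesis
    proof (cases "is_diamond E U")
      case True thus ?thesis using UV unfolding unitc_def by blast
    next
      case False
      hence T: "is_triangle E U" using Qt U by blast
      have "\<not> (\<exists>D. is_diamond E D \<and> U \<subseteq> D)"
      proof
        assume "\<exists>D. is_diamond E D \<and> U \<subseteq> D"
        then obtain D where D: "is_diamond E D" "U \<subseteq> D" by blast
        have "card U = 3" using T by (simp add: is_triangle_def)
        moreover have cD: "card D = 4" using D(1) unfolding is_diamond_def by auto
        ultimately have "\<exists>w\<in>D. w \<notin> U" using D(2) by (metis numeral_eq_iff semiring_norm(83,89) subset_antisym subsetI)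
        then obtain w where w: "w \<in> D" "w \<notin> U" by blast
        have wV: "w \<in> V" using D(1) w(1) EV1 EV2 unfolding is_diamond_def by blast
        obtain y z where yz: "y \<noteq> z" "y \<in> D" "z \<in> D" "E w y" "E w z" using two_in D(1) w(1) by blast
        have "y \<in> U" "z \<in> U"
        proof -
          have "finite D" using D(1) unfolding is_diamond_def by auto
          have "D - {w} \<subseteq> U"
          proof (rule ccontr)
            assume "\<not> D - {w} \<subseteq> U"
            then obtain u where "u \<in> D" "u \<noteq> w" "u \<notin> U" by blast
            hence "U \<subseteq> D - {w,u}" using D(2) w by blast
            hence "card U \<le> card (D - {w,u})" using \<open>finite D\<close> by (simp add: card_mono)
            also have "\<dots> = 2" using \<open>u \<in> D\<close> \<open>u \<noteq> w\<close> w(1) cD \<open>finite D\<close> by (simp add: card_Diff_subset)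
            finally show False using \<open>card U = 3\<close> by simp
          qed
          thus "y \<in> U" "z \<in> U" using yz Ene by blast+
        qed
        obtain U2 where U2: "U2 \<in> Q" "w \<in> U2" using QU wV by blast
        have "U2 \<noteq> U" using U2 w by blast
        hence "y \<notin> U2" "z \<notin> U2" using Qd[OF U U2(1)] \<open>y \<in> U\<close> \<open>z \<in> U\<close> by blast+
        obtain y2 z2 where "y2 \<noteq> z2" "y2 \<in> U2" "z2 \<in> U2" "E w y2" "E w z2" using two_in[OF Qt[OF U2(1)] U2(2)] by blast
        thus False using no4[of w y z y2 z2] yz \<open>y \<notin> U2\<close> \<open>z \<notin> U2\<close> by blast
      qed
      thus ?thesis using T UV unfolding unitc_def by blast
    qed
  qed
  show ?thesis
  proof
    show "Q \<subseteq> PP" using QP by (auto simp: PP_def)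
  next
    show "PP \<subseteq> Q"
    proof
      fix U assume "U \<in> PP"
      hence U: "unitc U" by (simp add: PP_def)
      then obtain v where "v \<in> U" using unitc_td[OF U] unfolding is_triangle_def is_diamond_def by fastforce
      then obtain U' where "U' \<in> Q" "v \<in> U'" using QU unitc_sub[OF U] by blast
      hence "U' = U" using unit_eq[OF QP[OF \<open>U' \<in> Q\<close>] U] \<open>v \<in> U\<close> by blast
      thus "U \<in> Q" using \<open>U' \<in> Q\<close> by blast
    qed
  qed
qed

lemma num_units_eq: "num_units V E = card PP"
proof -
  have "(THE P. unit_partition V E P) = PP"
    using PP_part PP_uniq by (rule the_equality)
  thus ?thesis by (simp add: num_units_def)
qed

end

context cg begin

definition unit :: "'a \<Rightarrow> 'a set" where "unit v = (THE U. U \<in> PP \<and> v \<in> U)"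

lemma PP_unitc: "U \<in> PP \<longleftrightarrow> unitc U" by (simp add: PP_def)

lemma unit: assumes "v \<in> V" shows "unit v \<in> PP" "v \<in> unit v"
proof -
  obtain U where U: "unitc U" "v \<in> U" using cover[OF assms] by blast
  have "unit v = U" unfolding unit_def
    by (rule the_equality) (use U unit_eq in \<open>auto simp: PP_def\<close>)
  thus "unit v \<in> PP" "v \<in> unit v" using U by (auto simp: PP_def)
qed

lemma unit_eqI: assumes "U \<in> PP" "v \<in> U" shows "unit v = U"
proof -
  have "v \<in> V" using assms unitc_sub by (auto simp: PP_def)
  thus ?thesis using unit[of v] assms unit_eq by (auto simp: PP_def)
qed

lemma PP_sub: "U \<in> PP \<Longrightarrow> U \<subseteq> V" using unitc_sub by (auto simp: PP_def)
lemma PP_fin: "finite PP" using finV PP_sub by (meson Pow_iff finite_Pow_iff finite_subset subsetI)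
lemma PP_td: "U \<in> PP \<Longrightarrow> is_triangle E U \<or> is_diamond E U" using unitc_td by (auto simp: PP_def)
lemma PP_ne: "U \<in> PP \<Longrightarrow> U \<noteq> {}" using PP_td unfolding is_triangle_def is_diamond_def by fastforce
lemma PP_fin_el: "U \<in> PP \<Longrightarrow> finite U" using PP_sub finV finite_subset by blast
lemma PP_disj: "U \<in> PP \<Longrightarrow> U' \<in> PP \<Longrightarrow> v \<in> U \<Longrightarrow> v \<in> U' \<Longrightarrow> U = U'"
  using unit_eq by (auto simp: PP_def)
lemma PP_K1: "U \<in> PP \<Longrightarrow> x \<in> U \<Longrightarrow> E x y \<Longrightarrow> E x y' \<Longrightarrow> y \<notin> U \<Longrightarrow> y' \<notin> U \<Longrightarrow> y = y'"
  using K1 by (auto simp: PP_def)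

lemma tri_struct: assumes "U \<in> PP" "\<not> is_diamond E U"
  obtains x y z where "U = {x,y,z}" "x \<noteq> y" "x \<noteq> z" "y \<noteq> z" "E x y" "E x z" "E y z"
  using PP_td[OF assms(1)] assms(2) tri_obtain by blast

lemma tri_out: assumes "U \<in> PP" "\<not> is_diamond E U" "x \<in> U" shows "\<exists>y. E x y \<and> y \<notin> U"
proof -
  obtain a b c where U: "U = {a,b,c}" "a \<noteq> b" "a \<noteq> c" "b \<noteq> c" "E a b" "E a c" "E b c"
    using tri_struct[OF assms(1,2)] by blast
  have s: "E b a" "E c a" "E c b" using U Esym by auto
  obtain p q where pq: "p \<noteq> q" "p \<in> U" "q \<in> U" "p \<noteq> x" "q \<noteq> x" "E x p" "E x q"
    using U s assms(3) by blast
  obtain t where "E x t" "t \<noteq> p" "t \<noteq> q" using third[OF pq(6,7,1)] by blast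
  moreover have "t \<noteq> x" using \<open>E x t\<close> Ene by blast
  ultimately have "t \<notin> U" using pq U assms(3) by auto
  thus ?thesis using \<open>E x t\<close> by blast
qed

lemma dia_struct: assumes "U \<in> PP" "is_diamond E U"
  obtains a b c d a' b' where "U = {a,b,c,d}" "a \<noteq> b" "a \<noteq> c" "a \<noteq> d" "b \<noteq> c" "b \<noteq> d" "c \<noteq> d"
    "\<not> E a b" "E a c" "E a d" "E b c" "E b d" "E c d"
    "nbrs E c = {a,b,d}" "nbrs E d = {a,b,c}" "nbrs E a = {c,d,a'}" "nbrs E b = {c,d,b'}" "a' \<notin> U" "b' \<notin> U"
proof -
  obtain a b c d where U: "U = {a,b,c,d}" "a \<noteq> b" "a \<noteq> c" "a \<noteq> d" "b \<noteq> c" "b \<noteq> d" "c \<noteq> d"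
    "\<not> E a b" "E a c" "E a d" "E b c" "E b d" "E c d" using dia_obtain[OF assms(2)] by blast
  have s: "E c a" "E d a" "E c b" "E d b" "E d c" using U Esym by auto
  have nc: "nbrs E c = {a,b,d}" using nbrs_eq3[of c a b d] s U by auto
  have nd: "nbrs E d = {a,b,c}" using nbrs_eq3[of d a b c] s U by auto
  obtain a' where a': "E a a'" "a' \<noteq> c" "a' \<noteq> d" using third[OF U(9,10,7)] by blast
  obtain b' where b': "E b b'" "b' \<noteq> c" "b' \<noteq> d" using third[OF U(11,12,7)] by blast
  have "a' \<noteq> a" "b' \<noteq> b" using a' b' Ene by auto
  moreover have "a' \<noteq> b" "b' \<noteq> a" using a' b' U(8) Esym by auto
  ultimately have out: "a' \<notin> U" "b' \<notin> U" using a' b' U by auto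
  have na: "nbrs E a = {c,d,a'}" using nbrs_eq3[of a c d a'] U a' by auto
  have nb: "nbrs E b = {c,d,b'}" using nbrs_eq3[of b c d b'] U b' by auto
  show ?thesis using that U nc nd na nb out by blast
qed

definition cen :: "'a \<Rightarrow> bool" where "cen x \<longleftrightarrow> nbrs E x \<subseteq> unit x"

definition closed :: "'a set \<Rightarrow> bool" where
  "closed C \<longleftrightarrow> (\<forall>w\<in>V. \<forall>p q. p \<noteq> q \<and> E w p \<and> E w q \<and> p \<in> C \<and> q \<in> C \<longrightarrow> w \<in> C)"

lemma closedD: "closed C \<Longrightarrow> w \<in> V \<Longrightarrow> p \<noteq> q \<Longrightarrow> E w p \<Longrightarrow> E w q \<Longrightarrow> p \<in> C \<Longrightarrow> q \<in> C \<Longrightarrow> w \<in> C"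
  by (auto simp: closed_def)

lemma card2_ex: assumes "finite A" "2 \<le> card A" shows "\<exists>p q. p \<in> A \<and> q \<in> A \<and> p \<noteq> q"
proof -
  obtain p where "p \<in> A" using assms by fastforce
  moreover have "card (A - {p}) \<ge> 1" using assms \<open>p \<in> A\<close> by simp
  then obtain q where "q \<in> A - {p}" by (metis all_not_in_conv card.empty not_one_le_zero)
  ultimately show ?thesis by blast
qed

lemma step_sub: assumes "closed C" "B \<subseteq> C" shows "spread_step V E 2 3 B \<subseteq> C"
proof
  fix w assume "w \<in> spread_step V E 2 3 B"
  hence "w \<in> B \<or> (w \<in> V \<and> 2 \<le> card (nbrs E w \<inter> B))" by (auto simp: spread_step_def)
  thus "w \<in> C"
  proof
    assume "w \<in> B" thus ?thesis using assms by blast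
  next
    assume w: "w \<in> V \<and> 2 \<le> card (nbrs E w \<inter> B)"
    then obtain p q where "p \<in> nbrs E w \<inter> B" "q \<in> nbrs E w \<inter> B" "p \<noteq> q"
      using card2_ex[of "nbrs E w \<inter> B"] nbrs_fin by blast
    thus ?thesis using closedD[OF assms(1)] w assms(2) by (auto simp: nbrs_def)
  qed
qed

lemma spread_sub: assumes "spreading_set V E 2 3 S" "closed C" "S \<subseteq> C" shows "V \<subseteq> C"
proof -
  obtain n where n: "(spread_step V E 2 3 ^^ n) S = V" using assms(1) by (auto simp: spreading_set_def)
  have "(spread_step V E 2 3 ^^ m) S \<subseteq> C" for m
    by (induction m) (use assms step_sub in auto)
  thus ?thesis using n by metis
qed

lemma spread_intro:
  assumes SV: "S \<subseteq> V" and H: "\<And>C. closed C \<Longrightarrow> S \<subseteq> C \<Longrightarrow> C \<subseteq> V \<Longrightarrow> V \<subseteq> C"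
  shows "spreading_set V E 2 3 S"
proof -
  define B where "B n = (spread_step V E 2 3 ^^ n) S" for n
  have BS: "B (Suc n) = spread_step V E 2 3 (B n)" for n by (simp add: B_def)
  have BV: "B n \<subseteq> V" for n
    by (induction n) (auto simp: B_def SV spread_step_def)
  have Bmono: "B n \<subseteq> B (Suc n)" for n by (auto simp: BS spread_step_def)
  have fix_closed: "closed (B n)" if fx: "B (Suc n) = B n" for n
    unfolding closed_def
  proof (intro ballI allI impI)
    fix w p q assume w: "w \<in> V" and pq: "p \<noteq> q \<and> E w p \<and> E w q \<and> p \<in> B n \<and> q \<in> B n"
    show "w \<in> B n"
    proof (rule ccontr)
      assume wn: "w \<notin> B n"
      have "{p,q} \<subseteq> nbrs E w \<inter> B n" using pq by (auto simp: nbrs_def)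
      hence "card {p,q} \<le> card (nbrs E w \<inter> B n)" using nbrs_fin by (meson card_mono finite_Int)
      hence c2: "2 \<le> card (nbrs E w \<inter> B n)" using pq by simp
      have pV: "p \<in> V" using pq EV2 by blast
      have "card (nbrs E p - B n) \<le> 3" using nbrs_card[OF pV] nbrs_fin
        by (metis card_mono Diff_subset)
      hence "enat (card (nbrs E p - B n)) \<le> 3" by (simp add: numeral_eq_enat)
      hence "w \<in> spread_step V E 2 3 (B n)" using w wn c2 pq unfolding spread_step_def nbrs_def by blast
      thus False using fx BS wn by simp
    qed
  qed
  have "\<exists>n. B (Suc n) = B n"
  proof (rule ccontr)
    assume "\<nexists>n. B (Suc n) = B n"
    hence ne: "B (Suc n) \<noteq> B n" for n by blast
    have "n \<le> card (B n)" for n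
    proof (induction n)
      case (Suc n)
      have "B n \<subset> B (Suc n)" using Bmono ne by blast
      hence "card (B n) < card (B (Suc n))" using BV finV by (meson finite_subset psubset_card_mono)
      thus ?case using Suc by simp
    qed simp
    moreover have "card (B n) \<le> card V" for n using BV finV card_mono by blast
    ultimately show False by (metis Suc_n_not_le_n le_trans)
  qed
  then obtain n where "B (Suc n) = B n" by blast
  hence "closed (B n)" using fix_closed by blast
  moreover have "S \<subseteq> B n" using Bmono by (induction n) (auto simp: B_def)
  ultimately have "V \<subseteq> B n" using H BV by blast
  hence "B n = V" using BV by blast
  thus ?thesis using SV by (auto simp: spreading_set_def B_def)
qed

lemma sigma_eq:
  assumes "spreading_set V E 2 3 S0" "card S0 = m" "\<And>S. spreading_set V E 2 3 S \<Longrightarrow> m \<le> card S"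
  shows "sigma V E 2 3 = m"
  unfolding sigma_def
  by (rule Least_equality) (use assms in auto)

lemma meets: assumes "spreading_set V E 2 3 S" "U \<in> PP" shows "S \<inter> U \<noteq> {}"
proof
  assume SU: "S \<inter> U = {}"
  have "closed (V - U)" unfolding closed_def
  proof (intro ballI allI impI)
    fix w p q assume "w \<in> V" "p \<noteq> q \<and> E w p \<and> E w q \<and> p \<in> V - U \<and> q \<in> V - U"
    thus "w \<in> V - U" using PP_K1[OF assms(2), of w p q] by blast
  qed
  moreover have "S \<subseteq> V - U" using SU assms(1) by (auto simp: spreading_set_def)
  ultimately have "V \<subseteq> V - U" using spread_sub assms(1) by blast
  thus False using PP_ne[OF assms(2)] PP_sub[OF assms(2)] by blast
qed

lemma lb: assumes "spreading_set V E 2 3 S" shows "card PP \<le> card S"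
proof -
  define f where "f U = (SOME s. s \<in> S \<inter> U)" for U
  have f: "f U \<in> S \<inter> U" if "U \<in> PP" for U using meets[OF assms that] unfolding f_def by (meson ex_in_conv someI_ex)
  have "inj_on f PP" unfolding inj_on_def using f PP_disj by (metis IntD2)
  moreover have "f ` PP \<subseteq> S" using f by blast
  moreover have "finite S" using assms finV finite_subset by (auto simp: spreading_set_def)
  ultimately show ?thesis using card_inj_on_le by blast
qed

lemma fill:
  assumes C: "closed C" and U: "U \<in> PP" and s: "s \<in> U" "s \<in> C" "is_diamond E U \<longrightarrow> nbrs E s \<subseteq> U"
    and p: "p \<in> U" "p \<noteq> s" "E p q" "q \<notin> U" "q \<in> C"
  shows "U \<subseteq> C"
proof (cases "is_diamond E U")
  case False
  then obtain x y z where T: "U = {x,y,z}" "x \<noteq> y" "x \<noteq> z" "y \<noteq> z" "E x y" "E x z" "E y z"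
    using tri_struct[OF U] by blast
  have sy: "E y x" "E z x" "E z y" using T Esym by auto
  have adj: "\<And>a b. a \<in> U \<Longrightarrow> b \<in> U \<Longrightarrow> a \<noteq> b \<Longrightarrow> E a b" using T sy by auto
  have UV: "U \<subseteq> V" using PP_sub U by blast
  have pC: "p \<in> C" using closedD[OF C, of p s q] adj[of p s] p s UV by auto
  show ?thesis
  proof
    fix r assume r: "r \<in> U"
    show "r \<in> C"
    proof (cases "r = s \<or> r = p")
      case True thus ?thesis using pC s by blast
    next
      case False thus ?thesis using closedD[OF C, of r s p] adj[of r s] adj[of r p] r s p pC UV by blast
    qed
  qed
next
  case True
  then obtain a b c d a' b' where D: "U = {a,b,c,d}" "a \<noteq> b" "a \<noteq> c" "a \<noteq> d" "b \<noteq> c" "b \<noteq> d" "c \<noteq> d"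
    "\<not> E a b" "E a c" "E a d" "E b c" "E b d" "E c d"
    "nbrs E c = {a,b,d}" "nbrs E d = {a,b,c}" "nbrs E a = {c,d,a'}" "nbrs E b = {c,d,b'}" "a' \<notin> U" "b' \<notin> U"
    using dia_struct[OF U] by metis
  have sy: "E c a" "E d a" "E c b" "E d b" "E d c" using D Esym by auto
  have UV: "a \<in> V" "b \<in> V" "c \<in> V" "d \<in> V" using PP_sub U D(1) by auto
  have sn: "s \<noteq> a" "s \<noteq> b" using s True D by (auto simp: nbrs_def)
  hence scd: "s = c \<or> s = d" using s D by auto
  have "q \<in> nbrs E p" using p by (simp add: nbrs_def)
  hence "p \<noteq> c" "p \<noteq> d" using D p by auto
  hence pab: "p = a \<or> p = b" using p D by auto
  have "a \<in> C \<and> b \<in> C \<and> c \<in> C \<and> d \<in> C"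
    using scd pab
  proof (elim disjE)
    assume "s = c" "p = a"
    have "a \<in> C" using closedD[OF C UV(1), of c q] p D s \<open>s = c\<close> \<open>p = a\<close> by blast
    moreover have "d \<in> C" using closedD[OF C UV(4) D(3) sy(2,5)] \<open>a \<in> C\<close> s \<open>s = c\<close> by blast
    moreover have "b \<in> C" using closedD[OF C UV(2) D(7) D(11,12)] \<open>d \<in> C\<close> s \<open>s = c\<close> by blast
    ultimately show ?thesis using s \<open>s = c\<close> by blast
  next
    assume "s = c" "p = b"
    have "b \<in> C" using closedD[OF C UV(2), of c q] p D s \<open>s = c\<close> \<open>p = b\<close> by blast
    moreover have "d \<in> C" using closedD[OF C UV(4) D(5) sy(4,5)] \<open>b \<in> C\<close> s \<open>s = c\<close> by blast
    moreover have "a \<in> C" using closedD[OF C UV(1) D(7) D(9,10)] \<open>d \<in> C\<close> s \<open>s = c\<close> by blast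
    ultimately show ?thesis using s \<open>s = c\<close> by blast
  next
    assume "s = d" "p = a"
    have "a \<in> C" using closedD[OF C UV(1), of d q] p D s \<open>s = d\<close> \<open>p = a\<close> by blast
    moreover have "c \<in> C" using closedD[OF C UV(3), of a d] sy D \<open>a \<in> C\<close> s \<open>s = d\<close> by blast
    moreover have "b \<in> C" using closedD[OF C UV(2) D(7) D(11,12)] \<open>c \<in> C\<close> s \<open>s = d\<close> by blast
    ultimately show ?thesis using s \<open>s = d\<close> by blast
  next
    assume "s = d" "p = b"
    have "b \<in> C" using closedD[OF C UV(2), of d q] p D s \<open>s = d\<close> \<open>p = b\<close> by blast
    moreover have "c \<in> C" using closedD[OF C UV(3), of b d] sy D \<open>b \<in> C\<close> s \<open>s = d\<close> by blast
    moreover have "a \<in> C" using closedD[OF C UV(1) D(7) D(9,10)] \<open>c \<in> C\<close> s \<open>s = d\<close> by blast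
    ultimately show ?thesis using s \<open>s = d\<close> by blast
  qed
  thus ?thesis using D by blast
qed

end

context cg begin

lemma dia_card: assumes "is_diamond E U" shows "card U = 4" "finite U"
  using assms unfolding is_diamond_def by auto

lemma dia_other: assumes "is_diamond E U" "t \<in> U" shows "\<exists>w\<in>U. w \<noteq> t"
  using assms unfolding is_diamond_def by auto

lemma dep_nonadj: assumes U: "U \<in> PP" "is_diamond E U" and xy: "x \<in> U" "y \<in> U" "x \<noteq> y"
  and o: "E x t" "t \<notin> U" "E y t'" "t' \<notin> U" shows "\<not> E x y"
proof -
  obtain a b c d a' b' where D: "U = {a,b,c,d}" "a \<noteq> b" "a \<noteq> c" "a \<noteq> d" "b \<noteq> c" "b \<noteq> d" "c \<noteq> d"
    "\<not> E a b" "E a c" "E a d" "E b c" "E b d" "E c d"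
    "nbrs E c = {a,b,d}" "nbrs E d = {a,b,c}" "nbrs E a = {c,d,a'}" "nbrs E b = {c,d,b'}" "a' \<notin> U" "b' \<notin> U"
    using dia_struct[OF U] by metis
  have "t \<in> nbrs E x" "t' \<in> nbrs E y" using o by (auto simp: nbrs_def)
  hence "x \<noteq> c" "x \<noteq> d" "y \<noteq> c" "y \<noteq> d" using D o by auto
  hence "{x,y} = {a,b}" using xy D by auto
  thus ?thesis using D Esym by (auto simp: doubleton_eq_iff)
qed

lemma cen_ex: assumes "U \<in> PP" "is_diamond E U" shows "\<exists>c\<in>U. nbrs E c \<subseteq> U"
proof -
  obtain a b c d a' b' where D: "U = {a,b,c,d}" "nbrs E c = {a,b,d}"
    using dia_struct[OF assms] by metis
  thus ?thesis by auto
qed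

lemma ep_ex: assumes "U \<in> PP" "is_diamond E U" shows "\<exists>e\<in>U. \<exists>f. E e f \<and> f \<notin> U"
proof -
  obtain a b c d a' b' where D: "U = {a,b,c,d}" "nbrs E a = {c,d,a'}" "a' \<notin> U"
    using dia_struct[OF assms] by metis
  thus ?thesis by (auto simp: nbrs_def set_eq_iff)
qed

lemma lb_dia: assumes S: "spreading_set V E 2 3 S" and AD: "\<forall>U\<in>PP. is_diamond E U"
  shows "card PP + 1 \<le> card S"
proof -
  have SV: "S \<subseteq> V" and finS: "finite S" using S finV finite_subset by (auto simp: spreading_set_def)
  show ?thesis
  proof (cases "\<exists>U\<in>PP. \<exists>s1 s2. s1 \<noteq> s2 \<and> s1 \<in> S \<inter> U \<and> s2 \<in> S \<inter> U")
    case True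
    then obtain U0 s1 s2 where U0: "U0 \<in> PP" "s1 \<noteq> s2" "s1 \<in> S \<inter> U0" "s2 \<in> S \<inter> U0" by blast
    define f where "f U = (SOME s. s \<in> S \<inter> U)" for U
    have f: "f U \<in> S \<inter> U" if "U \<in> PP" for U using meets[OF S that] unfolding f_def by (meson ex_in_conv someI_ex)
    have inj: "inj_on f PP" unfolding inj_on_def using f PP_disj by (metis IntD2)
    obtain t where t: "t \<in> S \<inter> U0" "t \<noteq> f U0" using U0 by blast
    have tn: "t \<notin> f ` PP"
    proof
      assume "t \<in> f ` PP"
      then obtain U where "U \<in> PP" "t = f U" by blast
      hence "U = U0" using f[of U] t U0 PP_disj by blast
      thus False using t \<open>t = f U\<close> by blast
    qed
    have "insert t (f ` PP) \<subseteq> S" using f t by blast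
    hence "card (insert t (f ` PP)) \<le> card S" using finS card_mono by blast
    moreover have "card (insert t (f ` PP)) = card PP + 1"
      using tn inj PP_fin by (simp add: card_image)
    ultimately show ?thesis by simp
  next
    case False
    hence one: "\<And>U s1 s2. U \<in> PP \<Longrightarrow> s1 \<in> S \<inter> U \<Longrightarrow> s2 \<in> S \<inter> U \<Longrightarrow> s1 = s2" by blast
    show ?thesis
    proof (cases "\<exists>U\<in>PP. \<exists>t\<in>S \<inter> U. \<not> nbrs E t \<subseteq> U")
      case True
      then obtain U t where U: "U \<in> PP" "t \<in> S \<inter> U" "\<not> nbrs E t \<subseteq> U" by blast
      then obtain t' where t': "E t t'" "t' \<notin> U" by (auto simp: nbrs_def)
      let ?C = "V - (U - {t})"
      have "closed ?C" unfolding closed_def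
      proof (intro ballI allI impI)
        fix w p q assume w: "w \<in> V" and pq: "p \<noteq> q \<and> E w p \<and> E w q \<and> p \<in> ?C \<and> q \<in> ?C"
        show "w \<in> ?C"
        proof (rule ccontr)
          assume "w \<notin> ?C"
          hence wU: "w \<in> U" "w \<noteq> t" using w by auto
          have "\<not> (p \<notin> U \<and> q \<notin> U)" using PP_K1[OF U(1) wU(1), of p q] pq by blast
          hence "(p = t \<and> q \<notin> U) \<or> (q = t \<and> p \<notin> U)" using pq by blast
          then obtain r where r: "E w r" "r \<notin> U" "E w t" using pq by blast
          thus False using dep_nonadj[OF U(1) AD[rule_format, OF U(1)] wU(1) _ wU(2) r(1,2) t'] U(2) by blast
        qed
      qed
      moreover have "S \<subseteq> ?C" using one[OF U(1)] U(2) SV by blast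
      ultimately have "V \<subseteq> ?C" using spread_sub[OF S] by blast
      moreover obtain w where "w \<in> U" "w \<noteq> t" using dia_other AD U by blast
      ultimately show ?thesis using PP_sub[OF U(1)] by blast
    next
      case False
      hence cen: "\<And>U t. U \<in> PP \<Longrightarrow> t \<in> S \<inter> U \<Longrightarrow> nbrs E t \<subseteq> U" by blast
      have "closed S" unfolding closed_def
      proof (intro ballI allI impI)
        fix w p q assume w: "w \<in> V" and pq: "p \<noteq> q \<and> E w p \<and> E w q \<and> p \<in> S \<and> q \<in> S"
        show "w \<in> S"
        proof (rule ccontr)
          assume wS: "w \<notin> S"
          let ?U = "unit w"
          have U: "?U \<in> PP" "w \<in> ?U" using unit[OF w] by auto
          have "\<not> (p \<notin> ?U \<and> q \<notin> ?U)" using PP_K1[OF U, of p q] pq by blast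
          moreover have key: False if "x \<in> ?U" "y \<notin> ?U" "x \<in> S" "y \<in> S" "E w y" for x y
          proof -
            have yV: "y \<in> V" using that EV2 by blast
            have "nbrs E y \<subseteq> unit y" using cen[OF unit(1)[OF yV]] that unit[OF yV] by blast
            hence "w \<in> unit y" using that Esym by (auto simp: nbrs_def)
            hence "unit y = ?U" using PP_disj[OF unit(1)[OF yV] U(1)] U(2) by blast
            thus False using that unit[OF yV] by blast
          qed
          ultimately show False using pq one[OF U(1), of p q] by blast
        qed
      qed
      hence "V \<subseteq> S" using spread_sub[OF S] by blast
      moreover obtain v where v: "v \<in> V" using Vne by blast
      moreover obtain s where "s \<in> S \<inter> unit v" using meets[OF S unit(1)[OF v]] by blast
      moreover obtain w where "w \<in> unit v" "w \<noteq> s" using dia_other AD unit[OF v] by blast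
      ultimately show ?thesis using one[OF unit(1)[OF v], of s w] PP_sub[OF unit(1)[OF v]] by blast
    qed
  qed
qed

lemma ub_dia: assumes AD: "\<forall>U\<in>PP. is_diamond E U"
  shows "\<exists>S. spreading_set V E 2 3 S \<and> card S = card PP + 1"
proof -
  define cf where "cf U = (SOME c. c \<in> U \<and> nbrs E c \<subseteq> U)" for U
  have cfp: "cf U \<in> U" "nbrs E (cf U) \<subseteq> U" if "U \<in> PP" for U
    using cen_ex[OF that AD[rule_format, OF that]] unfolding cf_def by (metis (no_types, lifting) someI_ex)+
  obtain v0 where v0: "v0 \<in> V" using Vne by blast
  let ?U0 = "unit v0"
  obtain e0 f0 where e0: "e0 \<in> ?U0" "E e0 f0" "f0 \<notin> ?U0"
    using ep_ex[OF unit(1)[OF v0] AD[rule_format, OF unit(1)[OF v0]]] by blast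
  let ?S = "insert e0 (cf ` PP)"
  have inj: "inj_on cf PP" unfolding inj_on_def using cfp PP_disj by metis
  have e0n: "e0 \<notin> cf ` PP"
  proof
    assume "e0 \<in> cf ` PP"
    then obtain U where "U \<in> PP" "e0 = cf U" by blast
    hence "U = ?U0" using cfp PP_disj unit(1)[OF v0] e0(1) by metis
    thus False using cfp[OF unit(1)[OF v0]] \<open>e0 = cf U\<close> e0 by (auto simp: nbrs_def)
  qed
  have card: "card ?S = card PP + 1" using e0n inj PP_fin by (simp add: card_image)
  have SV: "?S \<subseteq> V" using cfp PP_sub e0(1) unit(1)[OF v0] by blast
  have sp: "spreading_set V E 2 3 ?S"
  proof (rule spread_intro[OF SV])
    fix C assume C: "closed C" "?S \<subseteq> C" "C \<subseteq> V"
    have fillU: "U \<subseteq> C" if U: "U \<in> PP" and w: "w \<in> U" "E w q" "q \<notin> U" "q \<in> C" for U w q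
    proof (rule fill[OF C(1) U cfp(1)[OF U]])
      show "cf U \<in> C" using C(2) U by blast
      show "is_diamond E U \<longrightarrow> nbrs E (cf U) \<subseteq> U" using cfp(2)[OF U] by blast
      show "w \<in> U" "E w q" "q \<notin> U" "q \<in> C" using w by auto
      show "w \<noteq> cf U" using cfp(2)[OF U] w by (auto simp: nbrs_def)
    qed
    let ?M = "{v \<in> V. unit v \<subseteq> C}"
    have f0V: "f0 \<in> V" using e0 EV2 by blast
    have "e0 \<notin> unit f0"
    proof
      assume "e0 \<in> unit f0"
      hence "unit f0 = ?U0" using PP_disj unit(1)[OF f0V] unit(1)[OF v0] e0(1) by blast
      thus False using unit(2)[OF f0V] e0(3) by simp
    qed
    hence "unit f0 \<subseteq> C" using fillU[OF unit(1)[OF f0V] unit(2)[OF f0V], of e0] e0 Esym C(2) by blast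
    hence f0M: "f0 \<in> ?M" using f0V by blast
    have "V \<subseteq> ?M"
    proof (rule closed_all[OF f0M f0V])
      fix a b assume a: "a \<in> ?M" and ab: "E a b"
      have bV: "b \<in> V" using ab EV2 by blast
      show "b \<in> ?M"
      proof (cases "b \<in> unit a")
        case True
        hence "unit b = unit a" using PP_disj[OF unit(1)[OF bV]] unit[of a] a unit(2)[OF bV] by blast
        thus ?thesis using a bV by simp
      next
        case False
        have "a \<notin> unit b"
        proof
          assume "a \<in> unit b"
          hence "unit a = unit b" using PP_disj[OF unit(1)[OF bV]] unit[of a] a by blast
          thus False using False unit(2)[OF bV] by simp
        qed
        moreover have "a \<in> C" using a unit[of a] by blast
        ultimately have "unit b \<subseteq> C" using fillU[OF unit(1)[OF bV] unit(2)[OF bV], of a] ab Esym by blast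
        thus ?thesis using bV by blast
      qed
    qed
    thus "V \<subseteq> C" using unit(2) by blast
  qed
  show ?thesis using sp card by blast
qed

end

context cg begin

definition Rm :: "'a \<Rightarrow> 'a \<Rightarrow> 'a \<Rightarrow> 'a \<Rightarrow> bool" where
  "Rm u v a b \<longleftrightarrow> E a b \<and> \<not> ((a = u \<and> b = v) \<or> (a = v \<and> b = u))"

definition far :: "'a \<Rightarrow> 'a \<Rightarrow> 'a set" where "far u v = {y. (Rm u v)\<^sup>*\<^sup>* v y}"

lemma far_sub: assumes "v \<in> V" shows "far u v \<subseteq> V"
proof
  fix y assume "y \<in> far u v"
  hence "(Rm u v)\<^sup>*\<^sup>* v y" by (simp add: far_def)
  thus "y \<in> V" by (induction rule: rtranclp_induct) (use assms EV2 in \<open>auto simp: Rm_def\<close>)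
qed

lemma far_fin: "v \<in> V \<Longrightarrow> finite (far u v)" using far_sub finV finite_subset by blast

lemma WConn: assumes U: "U \<in> PP" and vy: "v \<in> U" "y \<in> U"
  shows "(\<lambda>a b. E a b \<and> a \<in> U \<and> b \<in> U)\<^sup>*\<^sup>* v y"
proof (cases "v = y \<or> E v y")
  case True thus ?thesis using vy by (metis (mono_tags, lifting) r_into_rtranclp rtranclp.rtrancl_refl)
next
  case False
  show ?thesis
  proof (cases "is_diamond E U")
    case False
    then obtain a b c where T: "U = {a,b,c}" "a \<noteq> b" "a \<noteq> c" "b \<noteq> c" "E a b" "E a c" "E b c"
      using tri_struct[OF U] by blast
    have "E b a" "E c a" "E c b" using T Esym by auto
    thus ?thesis using \<open>\<not> (v = y \<or> E v y)\<close> T vy by auto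
  next
    case True
    then obtain a b c d a' b' where D: "U = {a,b,c,d}" "a \<noteq> b" "a \<noteq> c" "a \<noteq> d" "b \<noteq> c" "b \<noteq> d" "c \<noteq> d"
      "\<not> E a b" "E a c" "E a d" "E b c" "E b d" "E c d"
      using dia_struct[OF U] by metis
    have sy: "E c a" "E d a" "E c b" "E d b" "E d c" using D Esym by auto
    have "(v = a \<and> y = b) \<or> (v = b \<and> y = a)" using \<open>\<not> (v = y \<or> E v y)\<close> D sy vy by auto
    thus ?thesis
    proof
      assume "v = a \<and> y = b"
      thus ?thesis using D sy
        by (metis (mono_tags, lifting) insertCI converse_rtranclp_into_rtranclp r_into_rtranclp)
    next
      assume "v = b \<and> y = a"
      thus ?thesis using D sy
        by (metis (mono_tags, lifting) insertCI converse_rtranclp_into_rtranclp r_into_rtranclp)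
    qed
  qed
qed

lemma WConn_Rm: assumes "U \<in> PP" "v \<in> U" "y \<in> U" "u0 \<notin> U \<or> v0 \<notin> U"
  shows "(Rm u0 v0)\<^sup>*\<^sup>* v y"
proof -
  have "(\<lambda>a b. E a b \<and> a \<in> U \<and> b \<in> U) \<le> Rm u0 v0" using assms(4) by (auto simp: Rm_def)
  thus ?thesis using WConn[OF assms(1-3)] rtranclp_mono by blast
qed

lemma two_ep: assumes U: "U \<in> PP" "is_diamond E U" and v: "v \<in> U" "E v v'" "v' \<notin> U"
  and w: "w \<in> U" "E w w'" "w' \<notin> U" "v \<noteq> w" and z: "z \<in> U" "E z z'" "z' \<notin> U"
  shows "z = v \<or> z = w"
proof -
  obtain a b c d a' b' where D: "U = {a,b,c,d}" "a \<noteq> b" "a \<noteq> c" "a \<noteq> d" "b \<noteq> c" "b \<noteq> d" "c \<noteq> d"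
    "nbrs E c = {a,b,d}" "nbrs E d = {a,b,c}"
    using dia_struct[OF U] by metis
  have "\<And>x y. x \<in> U \<Longrightarrow> E x y \<Longrightarrow> y \<notin> U \<Longrightarrow> x = a \<or> x = b"
  proof -
    fix x y assume "x \<in> U" "E x y" "y \<notin> U"
    hence "y \<in> nbrs E x" by (simp add: nbrs_def)
    thus "x = a \<or> x = b" using D \<open>x \<in> U\<close> \<open>y \<notin> U\<close> by auto
  qed
  thus ?thesis using v w z by metis
qed

lemma dia_other_ep: assumes U: "U \<in> PP" "is_diamond E U" and v: "v \<in> U" "E v v'" "v' \<notin> U"
  obtains w w' where "w \<in> U" "w \<noteq> v" "E w w'" "w' \<notin> U"
proof -
  obtain a b c d a' b' where D: "U = {a,b,c,d}" "a \<noteq> b" "a \<noteq> c" "a \<noteq> d" "b \<noteq> c" "b \<noteq> d" "c \<noteq> d"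
    "nbrs E c = {a,b,d}" "nbrs E d = {a,b,c}" "nbrs E a = {c,d,a'}" "nbrs E b = {c,d,b'}" "a' \<notin> U" "b' \<notin> U"
    using dia_struct[OF U] by metis
  have "v' \<in> nbrs E v" using v by (simp add: nbrs_def)
  hence "v = a \<or> v = b" using D v by auto
  moreover have "E a a'" "E b b'" using D by (auto simp: nbrs_def set_eq_iff)
  ultimately show ?thesis using that D by auto
qed

lemma shrink:
  assumes uv: "E u v" "u \<notin> unit v" "u \<notin> far u v"
    and w: "w \<in> unit v" "w \<noteq> v" "E w w'" "w' \<notin> unit v" "w \<notin> far w w'"
  shows "far w w' \<subset> far u v"
proof -
  have vV: "v \<in> V" using uv EV2 by blast
  let ?W = "unit v"
  have W: "?W \<in> PP" "v \<in> ?W" using unit[OF vV] by auto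
  have WA: "y \<in> far u v" if "y \<in> ?W" for y using WConn_Rm[OF W(1) W(2) that, of u v] uv(2) by (simp add: far_def)
  have wA: "w' \<in> far u v"
  proof -
    have "Rm u v w w'" using w uv(2) by (auto simp: Rm_def)
    thus ?thesis using WA[OF w(1)] by (auto simp: far_def intro: rtranclp.rtrancl_into_rtrancl)
  qed
  have WF: "y \<notin> far w w'" if "y \<in> ?W" for y
  proof
    assume "y \<in> far w w'"
    moreover have "(Rm w w')\<^sup>*\<^sup>* y w" using WConn_Rm[OF W(1) that w(1), of w w'] w(4) by blast
    ultimately have "w \<in> far w w'" by (auto simp: far_def)
    thus False using w(5) by blast
  qed
  have uF: "u \<notin> far w w'"
  proof
    assume "u \<in> far w w'"
    moreover have "Rm w w' u v" using uv w W by (auto simp: Rm_def)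
    ultimately have "v \<in> far w w'" by (auto simp: far_def intro: rtranclp.rtrancl_into_rtrancl)
    thus False using WF W by blast
  qed
  have "y \<in> far u v" if "(Rm w w')\<^sup>*\<^sup>* w' y" for y
    using that
  proof (induction rule: rtranclp_induct)
    case base thus ?case using wA by simp
  next
    case (step y z)
    have "y \<in> far w w'" using step(1) by (simp add: far_def)
    hence "y \<noteq> u" "y \<noteq> v" using uF WF W by auto
    hence "Rm u v y z" using step(2) by (auto simp: Rm_def)
    thus ?case using step(3) by (auto simp: far_def intro: rtranclp.rtrancl_into_rtrancl)
  qed
  hence "far w w' \<subseteq> far u v" by (auto simp: far_def)
  moreover have "v \<in> far u v" "v \<notin> far w w'" using WA WF W by auto
  ultimately show ?thesis by blast
qed

lemma dia_bridge:
  assumes uv: "E u v" "u \<notin> unit v" "u \<notin> far u v" and dia: "is_diamond E (unit v)"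
    and w: "w \<in> unit v" "w \<noteq> v" "E w w'" "w' \<notin> unit v"
  shows "w \<notin> far w w'"
proof -
  have vV: "v \<in> V" using uv EV2 by blast
  let ?W = "unit v"
  have W: "?W \<in> PP" "v \<in> ?W" using unit[OF vV] by auto
  have WA: "y \<in> far u v" if "y \<in> ?W" for y using WConn_Rm[OF W(1) W(2) that, of u v] uv(2) by (simp add: far_def)
  have wA: "w' \<in> far u v"
  proof -
    have "Rm u v w w'" using w uv(2) by (auto simp: Rm_def)
    thus ?thesis using WA[OF w(1)] by (auto simp: far_def intro: rtranclp.rtrancl_into_rtrancl)
  qed
  have vu: "E v u" using uv Esym by blast
  have "y \<in> far u v \<and> y \<notin> ?W" if "(Rm w w')\<^sup>*\<^sup>* w' y" for y
    using that
  proof (induction rule: rtranclp_induct)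
    case base thus ?case using wA w by simp
  next
    case (step y z)
    have "y \<noteq> u" using step(3) uv(3) by blast
    moreover have "y \<noteq> v" using step(3) W by blast
    ultimately have "Rm u v y z" using step(2) by (auto simp: Rm_def)
    hence zA: "z \<in> far u v" using step(3) by (auto simp: far_def intro: rtranclp.rtrancl_into_rtrancl)
    have "z \<notin> ?W"
    proof
      assume zW: "z \<in> ?W"
      have zy: "E z y" using step(2) Esym by (auto simp: Rm_def)
      have "z = v \<or> z = w" using two_ep[OF W(1) dia W(2) vu uv(2) w(1) w(3) w(4) w(2)[symmetric] zW zy] step(3) by blast
      thus False
      proof
        assume "z = v"
        hence "y = u" using PP_K1[OF W(1) W(2) vu, of y] zy step(3) uv(2) by blast
        thus False using \<open>y \<noteq> u\<close> by blast
      next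
        assume "z = w"
        hence "y = w'" using PP_K1[OF W(1) w(1) w(3), of y] zy step(3) w(4) by blast
        thus False using step(2) \<open>z = w\<close> by (auto simp: Rm_def)
      qed
    qed
    thus ?case using zA by blast
  qed
  thus ?thesis using w(1) by (auto simp: far_def)
qed

lemma unit_out_sym: assumes "x \<in> V" "E x y" "y \<notin> unit x" shows "x \<notin> unit y"
proof
  assume "x \<in> unit y"
  have yV: "y \<in> V" using assms EV2 by blast
  have "unit x = unit y" using PP_disj[OF unit(1)[OF assms(1)] unit(1)[OF yV]] unit(2)[OF assms(1)] \<open>x \<in> unit y\<close> by blast
  thus False using assms unit(2)[OF yV] by simp
qed

lemma descent:
  assumes H0: "\<And>x x'. x \<in> V \<Longrightarrow> \<not> is_diamond E (unit x) \<Longrightarrow> E x x' \<Longrightarrow> x' \<notin> unit x \<Longrightarrow> x \<notin> far x x'"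
  shows "E u v \<Longrightarrow> u \<notin> unit v \<Longrightarrow> u \<notin> far u v \<Longrightarrow> False"
proof (induction "card (far u v)" arbitrary: u v rule: less_induct)
  case less
  have vV: "v \<in> V" using less EV2 by blast
  let ?W = "unit v"
  have W: "?W \<in> PP" "v \<in> ?W" using unit[OF vV] by auto
  obtain w w' where w: "w \<in> ?W" "w \<noteq> v" "E w w'" "w' \<notin> ?W" "w \<notin> far w w'"
  proof (cases "is_diamond E ?W")
    case False
    obtain a b c where T: "?W = {a,b,c}" "a \<noteq> b" "a \<noteq> c" "b \<noteq> c" "E a b" "E a c" "E b c"
      by (rule tri_struct[OF W(1) False])
    obtain w where w: "w \<in> ?W" "w \<noteq> v" using T by auto
    obtain w' where w': "E w w'" "w' \<notin> ?W" using tri_out[OF W(1) False w(1)] by blast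
    have wV: "w \<in> V" using w(1) PP_sub[OF W(1)] by blast
    have uw: "unit w = ?W" using unit_eqI[OF W(1) w(1)] .
    have "w \<notin> far w w'" using H0[OF wV _ w'(1)] uw False w'(2) by simp
    thus ?thesis using that w w' by blast
  next
    case True
    have vu: "E v u" using less Esym by blast
    obtain w w' where w: "w \<in> ?W" "w \<noteq> v" "E w w'" "w' \<notin> ?W"
      using dia_other_ep[OF W(1) True W(2) vu less(3)] by blast
    have "w \<notin> far w w'" using dia_bridge[OF less(2,3,4) True w] .
    thus ?thesis using that w by blast
  qed
  have sub: "far w w' \<subset> far u v" using shrink[OF less(2,3,4) w] .
  have "card (far w w') < card (far u v)" using psubset_card_mono[OF far_fin[OF vV] sub] .
  moreover have wV: "w \<in> V" using w(1) PP_sub[OF W(1)] by blast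
  moreover have "unit w = ?W" using PP_disj[OF unit(1)[OF wV] W(1)] w(1) unit(2)[OF wV] by blast
  hence "w \<notin> unit w'" using unit_out_sym[OF wV w(3)] w(4) by simp
  ultimately show False using less(1)[of w w'] w(3) w(5) by blast
qed

lemma exists_nb: assumes "\<not> (\<forall>U\<in>PP. is_diamond E U)"
  shows "\<exists>x x'. x \<in> V \<and> \<not> is_diamond E (unit x) \<and> E x x' \<and> x' \<notin> unit x \<and> x \<in> far x x'"
proof (rule ccontr)
  assume H: "\<not> ?thesis"
  obtain U where U: "U \<in> PP" "\<not> is_diamond E U" using assms by blast
  obtain x where x: "x \<in> U" using PP_ne[OF U(1)] by blast
  obtain x' where x': "E x x'" "x' \<notin> U" using tri_out[OF U x] by blast
  have xV: "x \<in> V" using x PP_sub U by blast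
  have ux: "unit x = U" using unit_eqI[OF U(1) x] .
  have "x \<notin> unit x'" using unit_out_sym[OF xV x'(1)] ux x' by simp
  moreover have "x \<notin> far x x'" using H xV U ux x' by blast
  ultimately show False using descent[of x x'] H x'(1) by blast
qed

end

context cg begin

lemma ub_tri: assumes nAD: "\<not> (\<forall>U\<in>PP. is_diamond E U)"
  shows "\<exists>S. spreading_set V E 2 3 S \<and> card S = card PP"
proof -
  obtain x0 x' where X: "x0 \<in> V" "\<not> is_diamond E (unit x0)" "E x0 x'" "x' \<notin> unit x0" "x0 \<in> far x0 x'"
    using exists_nb[OF nAD] by blast
  define R where "R = Rm x0 x'"
  have x'V: "x' \<in> V" using X EV2 by blast
  have RE: "R a b \<Longrightarrow> E a b" for a b by (simp add: R_def Rm_def)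
  have Rx0: "R\<^sup>*\<^sup>* x' x0" using X(5) by (simp add: far_def R_def)
  have reach: "R\<^sup>*\<^sup>* x' v" if "v \<in> V" for v
  proof -
    have "E\<^sup>*\<^sup>* x' v" using conn_all[OF x'V that] .
    thus ?thesis
    proof (induction rule: rtranclp_induct)
      case base thus ?case by simp
    next
      case (step a b)
      show ?case
      proof (cases "R a b")
        case True thus ?thesis using step(3) by (meson rtranclp.rtrancl_into_rtrancl)
      next
        case False
        hence "b = x' \<or> b = x0" using step(2) by (auto simp: R_def Rm_def)
        thus ?thesis using Rx0 by auto
      qed
    qed
  qed
  define dist where "dist v = (LEAST n. (R ^^ n) x' v)" for v
  have distP: "(R ^^ dist v) x' v" if vV: "v \<in> V" for v
  proof -
    obtain n where "(R ^^ n) x' v" using reach[OF vV] rtranclp_power by metis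
    thus ?thesis unfolding dist_def by (rule LeastI)
  qed
  have distle: "(R ^^ n) x' v \<Longrightarrow> dist v \<le> n" for n v unfolding dist_def by (rule Least_le)
  have dist0: "v = x'" if "v \<in> V" "dist v = 0" for v using distP[OF that(1)] that(2) by simp
  have distS: "\<exists>q. q \<in> V \<and> dist q \<le> m \<and> R q v" if "v \<in> V" "dist v = Suc m" for v m
  proof -
    have "(R ^^ Suc m) x' v" using distP[OF that(1)] that(2) by simp
    then obtain q where "(R ^^ m) x' q" "R q v" by (rule relpowp_Suc_E)
    thus ?thesis using distle RE EV1 by blast
  qed
  define mU where "mU U = Min (dist ` U)" for U
  define pU where "pU U = (SOME p. p \<in> U \<and> dist p = mU U)" for U
  have pU: "pU U \<in> U \<and> dist (pU U) = mU U" if "U \<in> PP" for U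
  proof -
    have "mU U \<in> dist ` U" unfolding mU_def using PP_fin_el[OF that] PP_ne[OF that] by simp
    hence "\<exists>p. p \<in> U \<and> dist p = mU U" by auto
    thus ?thesis unfolding pU_def by (rule someI_ex)
  qed
  have mU_le: "mU U \<le> dist y" if "U \<in> PP" "y \<in> U" for U y
    unfolding mU_def using PP_fin_el[OF that(1)] that(2) by simp
  define T0 where "T0 = unit x0"
  have T0: "T0 \<in> PP" "x0 \<in> T0" "\<not> is_diamond E T0" using unit[OF X(1)] X(2) by (auto simp: T0_def)
  define s where "s U = (if is_diamond E U then (SOME c. c \<in> U \<and> nbrs E c \<subseteq> U)
      else if U = T0 then x0 else (SOME y. y \<in> U \<and> y \<noteq> pU U))" for U
  have s_dia: "s U \<in> U \<and> nbrs E (s U) \<subseteq> U" if "U \<in> PP" "is_diamond E U" for U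
  proof -
    have "\<exists>c. c \<in> U \<and> nbrs E c \<subseteq> U" using cen_ex[OF that] by blast
    hence "(SOME c. c \<in> U \<and> nbrs E c \<subseteq> U) \<in> U \<and> nbrs E (SOME c. c \<in> U \<and> nbrs E c \<subseteq> U) \<subseteq> U"
      by (rule someI_ex)
    thus ?thesis using that by (simp add: s_def)
  qed
  have s_tri: "s U \<in> U \<and> s U \<noteq> pU U" if UU: "U \<in> PP" "\<not> is_diamond E U" "U \<noteq> T0" for U
  proof -
    obtain a b c where T: "U = {a,b,c}" "a \<noteq> b" "a \<noteq> c" "b \<noteq> c" "E a b" "E a c" "E b c"
      by (rule tri_struct[OF UU(1,2)])
    have "\<exists>y. y \<in> U \<and> y \<noteq> pU U"
    proof (cases "pU U = a")
      case True thus ?thesis using T(1,2) by (intro exI[of _ b]) simp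
    next
      case False thus ?thesis using T(1) by (intro exI[of _ a]) simp
    qed
    hence "(SOME y. y \<in> U \<and> y \<noteq> pU U) \<in> U \<and> (SOME y. y \<in> U \<and> y \<noteq> pU U) \<noteq> pU U" by (rule someI_ex)
    thus ?thesis using that by (simp add: s_def)
  qed
  have sT0: "s T0 = x0" using T0 by (simp add: s_def)
  have s_in: "s U \<in> U" if "U \<in> PP" for U using s_dia s_tri sT0 T0 that by (cases "is_diamond E U"; cases "U = T0") auto
  have x0ne: "pU T0 \<noteq> x0"
  proof
    assume h: "pU T0 = x0"
    have "x0 \<noteq> x'" using X(3) Ene by blast
    hence "dist x0 \<noteq> 0" using dist0[OF X(1)] by blast
    then obtain m where m: "dist x0 = Suc m" using not0_implies_Suc by blast
    then obtain y where y: "y \<in> V" "dist y \<le> m" "R y x0" using distS[OF X(1)] by blast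
    have "E x0 y" using RE[OF y(3)] Esym by blast
    moreover have "y \<noteq> x'" using y(3) by (auto simp: R_def Rm_def)
    ultimately have "y \<in> T0" using PP_K1[OF T0(1) T0(2) _ X(3)] X(4) T0_def by blast
    hence "mU T0 \<le> dist y" using mU_le T0 by blast
    thus False using h pU[OF T0(1)] y(2) m by simp
  qed
  let ?S = "s ` PP"
  have inj: "inj_on s PP" unfolding inj_on_def using s_in PP_disj by metis
  have card: "card ?S = card PP" using inj by (simp add: card_image)
  have SV: "?S \<subseteq> V" using s_in PP_sub by blast
  have sp: "spreading_set V E 2 3 ?S"
  proof (rule spread_intro[OF SV])
    fix C assume C: "closed C" "?S \<subseteq> C" "C \<subseteq> V"
    have sC: "s U \<in> C" if "U \<in> PP" for U using C(2) that by blast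
    have x0C: "x0 \<in> C" using sC[OF T0(1)] sT0 by simp
    have fillU: "U \<subseteq> C" if U: "U \<in> PP" and pq: "pU U \<in> U" "E (pU U) q" "q \<notin> U" "q \<in> C" for U q
    proof (rule fill[OF C(1) U s_in[OF U] sC[OF U]])
      show "is_diamond E U \<longrightarrow> nbrs E (s U) \<subseteq> U" using s_dia U by blast
      show "pU U \<in> U" "E (pU U) q" "q \<notin> U" "q \<in> C" using pq by auto
      show "pU U \<noteq> s U"
      proof (cases "is_diamond E U")
        case True thus ?thesis using s_dia[OF U True] pq by (auto simp: nbrs_def)
      next
        case False thus ?thesis using s_tri[OF U False] x0ne sT0 by (cases "U = T0") auto
      qed
    qed
    have main: "\<forall>U\<in>PP. mU U = n \<longrightarrow> U \<subseteq> C" for n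
    proof (induction n rule: less_induct)
      case (less n)
      show ?case
      proof (intro ballI impI)
        fix U assume U: "U \<in> PP" and n: "mU U = n"
        let ?p = "pU U"
        have p: "?p \<in> U" "dist ?p = n" using pU[OF U] n by auto
        have pV: "?p \<in> V" using p PP_sub U by blast
        show "U \<subseteq> C"
        proof (cases n)
          case 0
          hence "?p = x'" using dist0[OF pV] p by simp
          moreover have "x0 \<notin> U"
          proof
            assume "x0 \<in> U"
            hence "U = T0" using PP_disj[OF U T0(1)] T0(2) by blast
            thus False using p \<open>?p = x'\<close> X(4) T0_def by simp
          qed
          moreover have "E x' x0" using X(3) Esym by blast
          ultimately show ?thesis using fillU[OF U p(1), of x0] x0C by simp
        next
          case (Suc m)
          then obtain q where q: "q \<in> V" "dist q \<le> m" "R q ?p" using distS[OF pV] p by blast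
          have qn: "q \<notin> U"
          proof
            assume "q \<in> U"
            hence "mU U \<le> dist q" using mU_le U by blast
            thus False using n q Suc by simp
          qed
          have "mU (unit q) \<le> dist q" using mU_le unit[OF q(1)] by blast
          hence "unit q \<subseteq> C" using less[rule_format, of "mU (unit q)" "unit q"] unit[OF q(1)] q(2) Suc by simp
          hence "q \<in> C" using unit[OF q(1)] by blast
          moreover have "E ?p q" using RE[OF q(3)] Esym by blast
          ultimately show ?thesis using fillU[OF U p(1), of q] qn by simp
        qed
      qed
    qed
    show "V \<subseteq> C"
    proof
      fix v assume v: "v \<in> V"
      have "unit v \<subseteq> C" using main unit[OF v] by blast
      thus "v \<in> C" using unit[OF v] by blast
    qed
  qed
  show ?thesis using sp card by blast
qed

end

lemma suc_mod_ne: assumes "2 \<le> (k::nat)" "i < k" shows "Suc i mod k \<noteq> i"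
proof (cases "Suc i < k")
  case True thus ?thesis by simp
next
  case False
  hence "Suc i = k" using assms by simp
  thus ?thesis using assms by simp
qed

context cg begin

lemma iso_dia: assumes iso: "graph_iso V E (necklace_V k) (necklace_E k)" and k: "2 \<le> k" and v: "v \<in> V"
  shows "\<exists>D. is_diamond E D \<and> v \<in> D \<and> D \<subseteq> V"
proof -
  obtain f where f: "bij_betw f V (necklace_V k)" "\<forall>x\<in>V. \<forall>y\<in>V. E x y \<longleftrightarrow> necklace_E k (f x) (f y)"
    using iso unfolding graph_iso_def by blast
  define g where "g = inv_into V f"
  have gb: "bij_betw g (necklace_V k) V" using f(1) bij_betw_inv_into g_def by blast
  have fg: "f (g x) = x" if "x \<in> necklace_V k" for x using f(1) that g_def
    by (simp add: bij_betw_inv_into_right)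
  have gf: "g (f x) = x" if "x \<in> V" for x using f(1) that g_def
    by (simp add: bij_betw_inv_into_left)
  have gV: "g x \<in> V" if "x \<in> necklace_V k" for x using gb that bij_betwE by blast
  have Eg: "E (g x) (g y) \<longleftrightarrow> necklace_E k x y" if "x \<in> necklace_V k" "y \<in> necklace_V k" for x y
    using f(2) gV[OF that(1)] gV[OF that(2)] fg that by metis
  have ginj: "g x = g y \<Longrightarrow> x \<in> necklace_V k \<Longrightarrow> y \<in> necklace_V k \<Longrightarrow> x = y" for x y
    using gb unfolding bij_betw_def inj_on_def by blast
  obtain i j where ij: "f v = (i,j)" by fastforce
  have ik: "i < k" "j < 4" using f(1) v ij bij_betwE unfolding necklace_V_def by fastforce+
  have inN: "(i,0) \<in> necklace_V k" "(i,1) \<in> necklace_V k" "(i,2) \<in> necklace_V k" "(i,3) \<in> necklace_V k"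
    using ik by (auto simp: necklace_V_def)
  have sm: "Suc i mod k \<noteq> i" using suc_mod_ne k ik by blast
  let ?a = "g (i,0)" and ?b = "g (i,1)" and ?c = "g (i,2)" and ?d = "g (i,3)"
  have "\<not> E ?a ?b" using Eg[OF inN(1,2)] sm by (simp add: necklace_E_def)
  moreover have "E ?a ?c" "E ?a ?d" "E ?b ?c" "E ?b ?d" "E ?c ?d"
    using Eg inN by (auto simp: necklace_E_def)
  moreover have "distinct [?a, ?b, ?c, ?d]" using ginj inN by fastforce
  ultimately have "is_diamond E {?a, ?b, ?c, ?d}" unfolding is_diamond_def by blast
  moreover have "v \<in> {?a, ?b, ?c, ?d}"
  proof -
    have "v = g (i,j)" using gf[OF v] ij by simp
    thus ?thesis using ik(2) by (auto simp: less_Suc_eq numeral_eq_Suc)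
  qed
  moreover have "{?a, ?b, ?c, ?d} \<subseteq> V" using gV inN by blast
  ultimately show ?thesis by blast
qed

lemma iso_AD: assumes "graph_iso V E (necklace_V k) (necklace_E k)" "2 \<le> k"
  shows "\<forall>U\<in>PP. is_diamond E U"
proof
  fix U assume U: "U \<in> PP"
  obtain v where v: "v \<in> U" using PP_ne[OF U] by blast
  have vV: "v \<in> V" using v PP_sub[OF U] by blast
  obtain D where D: "is_diamond E D" "v \<in> D" "D \<subseteq> V" using iso_dia[OF assms vV] by blast
  have "unitc D" using D by (simp add: unitc_def)
  hence "U = D" using PP_disj[OF U _ v D(2)] by (simp add: PP_def)
  thus "is_diamond E U" using D by simp
qed

end

context cg begin

definition ep :: "'a \<Rightarrow> bool" where "ep x \<longleftrightarrow> x \<in> V \<and> (\<exists>y. E x y \<and> y \<notin> unit x)"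
definition ext :: "'a \<Rightarrow> 'a" where "ext x = (THE y. E x y \<and> y \<notin> unit x)"
definition oth :: "'a \<Rightarrow> 'a" where "oth x = (THE y. y \<in> unit x \<and> y \<noteq> x \<and> \<not> E x y)"
definition cc :: "'a \<Rightarrow> 'a" where "cc x = (SOME y. y \<in> unit x \<and> E x y)"
definition dd :: "'a \<Rightarrow> 'a" where "dd x = (SOME y. y \<in> unit x \<and> E x y \<and> y \<noteq> cc x)"

lemma ep_struct: assumes AD: "\<forall>U\<in>PP. is_diamond E U" and x: "ep x"
  obtains b c d where "unit x = {x,b,c,d}" "x \<noteq> b" "x \<noteq> c" "x \<noteq> d" "b \<noteq> c" "b \<noteq> d" "c \<noteq> d"
    "\<not> E x b" "E x c" "E x d" "E b c" "E b d" "E c d"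
    "nbrs E c = {x,b,d}" "nbrs E d = {x,b,c}" "\<exists>x'. x' \<notin> unit x \<and> nbrs E x = {c,d,x'}"
    "\<exists>b'. b' \<notin> unit x \<and> nbrs E b = {c,d,b'}"
proof -
  have xV: "x \<in> V" using x by (simp add: ep_def)
  have U: "unit x \<in> PP" "x \<in> unit x" using unit[OF xV] by auto
  obtain a b c d a' b' where D: "unit x = {a,b,c,d}" "a \<noteq> b" "a \<noteq> c" "a \<noteq> d" "b \<noteq> c" "b \<noteq> d" "c \<noteq> d"
    "\<not> E a b" "E a c" "E a d" "E b c" "E b d" "E c d"
    "nbrs E c = {a,b,d}" "nbrs E d = {a,b,c}" "nbrs E a = {c,d,a'}" "nbrs E b = {c,d,b'}" "a' \<notin> unit x" "b' \<notin> unit x"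
    using dia_struct[OF U(1) AD[rule_format, OF U(1)]] by metis
  obtain y where y: "E x y" "y \<notin> unit x" using x by (auto simp: ep_def)
  have "y \<in> nbrs E x" using y by (simp add: nbrs_def)
  hence "x \<noteq> c" "x \<noteq> d" using D y by auto
  hence "x = a \<or> x = b" using D U by auto
  thus ?thesis
  proof
    assume "x = a" thus ?thesis using that D by blast
  next
    assume "x = b"
    have "\<not> E b a" using D Esym by blast
    have e1: "{b,a,c,d} = {a,b,c,d}" "{b,a,d} = {a,b,d}" "{b,a,c} = {a,b,c}" by auto
    show ?thesis apply (rule that[of a c d]) using D \<open>x = b\<close> \<open>\<not> E b a\<close> e1 by simp_all blast+
  qed
qed

lemma ext_prop: assumes "ep x" shows "E x (ext x)" "ext x \<notin> unit x" "\<And>y. E x y \<Longrightarrow> y \<notin> unit x \<Longrightarrow> y = ext x"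
proof -
  have xV: "x \<in> V" using assms by (simp add: ep_def)
  obtain y where y: "E x y" "y \<notin> unit x" using assms by (auto simp: ep_def)
  have u: "\<And>z. E x z \<Longrightarrow> z \<notin> unit x \<Longrightarrow> z = y" using PP_K1[OF unit(1)[OF xV] unit(2)[OF xV]] y by blast
  have ey: "ext x = y" unfolding ext_def
  proof (rule the_equality)
    show "E x y \<and> y \<notin> unit x" using y by blast
    show "\<And>z. E x z \<and> z \<notin> unit x \<Longrightarrow> z = y" using u by blast
  qed
  show "E x (ext x)" "ext x \<notin> unit x" using y ey by auto
  show "\<And>z. E x z \<Longrightarrow> z \<notin> unit x \<Longrightarrow> z = ext x" using u ey by blast
qed

lemma unit_same: assumes "x \<in> V" "y \<in> unit x" shows "unit y = unit x"
  using unit_eqI[OF unit(1)[OF assms(1)] assms(2)] .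

lemma ep_ext: assumes "ep x" shows "ep (ext x)" "ext (ext x) = x"
proof -
  have xV: "x \<in> V" using assms by (simp add: ep_def)
  have e: "E (ext x) x" using ext_prop(1)[OF assms] Esym by blast
  have eV: "ext x \<in> V" using e EV1 by blast
  have "x \<notin> unit (ext x)" using unit_out_sym[OF xV ext_prop(1,2)[OF assms]] .
  thus "ep (ext x)" using e eV by (auto simp: ep_def)
  thus "ext (ext x) = x" using ext_prop(3)[OF \<open>ep (ext x)\<close> e \<open>x \<notin> unit (ext x)\<close>] by simp
qed

lemma oth_prop: assumes AD: "\<forall>U\<in>PP. is_diamond E U" and x: "ep x"
  shows "oth x \<in> unit x" "oth x \<noteq> x" "\<not> E x (oth x)" "ep (oth x)" "unit (oth x) = unit x" "oth (oth x) = x"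
    "\<And>y. ep y \<Longrightarrow> y \<in> unit x \<Longrightarrow> y = x \<or> y = oth x"
proof -
  have xV: "x \<in> V" using x by (simp add: ep_def)
  obtain b c d where D: "unit x = {x,b,c,d}" "x \<noteq> b" "x \<noteq> c" "x \<noteq> d" "b \<noteq> c" "b \<noteq> d" "c \<noteq> d"
    "\<not> E x b" "E x c" "E x d" "E b c" "E b d" "E c d"
    "nbrs E c = {x,b,d}" "nbrs E d = {x,b,c}" "\<exists>x'. x' \<notin> unit x \<and> nbrs E x = {c,d,x'}"
    "\<exists>b'. b' \<notin> unit x \<and> nbrs E b = {c,d,b'}" using ep_struct[OF AD x] by metis
  have ob: "oth x = b" unfolding oth_def
  proof (rule the_equality)
    show "b \<in> unit x \<and> b \<noteq> x \<and> \<not> E x b" using D(1,2,8) by auto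
    show "\<And>y. y \<in> unit x \<and> y \<noteq> x \<and> \<not> E x y \<Longrightarrow> y = b" using D(1,9,10) by auto
  qed
  show "oth x \<in> unit x" "oth x \<noteq> x" "\<not> E x (oth x)" using ob D(1,2,8) by auto
  have bx: "b \<in> unit x" using D(1) by simp
  have bV: "b \<in> V" using bx PP_sub[OF unit(1)[OF xV]] by blast
  have ub: "unit b = unit x" using unit_same[OF xV bx] .
  obtain b' where b': "b' \<notin> unit x" "nbrs E b = {c,d,b'}" using D(17) by blast
  have "E b b'" using b' by (auto simp: nbrs_def set_eq_iff)
  thus "ep (oth x)" using ob bV ub b' by (auto simp: ep_def)
  show "unit (oth x) = unit x" using ob ub by simp
  have "\<not> E b x" using D(8) Esym by blast
  have "oth b = x" unfolding oth_def ub
  proof (rule the_equality)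
    show "x \<in> unit x \<and> x \<noteq> b \<and> \<not> E b x" using D(1,2) \<open>\<not> E b x\<close> by auto
    show "\<And>y. y \<in> unit x \<and> y \<noteq> b \<and> \<not> E b y \<Longrightarrow> y = x" using D(1,11,12) by auto
  qed
  thus "oth (oth x) = x" using ob by simp
  fix y assume y: "ep y" "y \<in> unit x"
  obtain z where z: "E y z" "z \<notin> unit y" using y by (auto simp: ep_def)
  have "unit y = unit x" using unit_same[OF xV y(2)] .
  hence "z \<in> nbrs E y" "z \<notin> unit x" using z by (auto simp: nbrs_def)
  hence "y \<noteq> c" "y \<noteq> d" using D(1,14,15) by auto
  thus "y = x \<or> y = oth x" using y(2) D(1) ob by auto
qed

lemma cc_prop: assumes AD: "\<forall>U\<in>PP. is_diamond E U" and x: "ep x"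
  shows "unit x = {x, oth x, cc x, dd x}" "distinct [x, oth x, cc x, dd x]"
    "E x (cc x)" "E x (dd x)" "E (oth x) (cc x)" "E (oth x) (dd x)" "E (cc x) (dd x)"
    "nbrs E (cc x) \<subseteq> unit x" "nbrs E (dd x) \<subseteq> unit x"
proof -
  obtain b c d where D: "unit x = {x,b,c,d}" "x \<noteq> b" "x \<noteq> c" "x \<noteq> d" "b \<noteq> c" "b \<noteq> d" "c \<noteq> d"
    "\<not> E x b" "E x c" "E x d" "E b c" "E b d" "E c d"
    "nbrs E c = {x,b,d}" "nbrs E d = {x,b,c}" "\<exists>x'. x' \<notin> unit x \<and> nbrs E x = {c,d,x'}"
    "\<exists>b'. b' \<notin> unit x \<and> nbrs E b = {c,d,b'}" using ep_struct[OF AD x] by metis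
  have ob: "oth x = b" unfolding oth_def
  proof (rule the_equality)
    show "b \<in> unit x \<and> b \<noteq> x \<and> \<not> E x b" using D(1,2,8) by auto
    show "\<And>y. y \<in> unit x \<and> y \<noteq> x \<and> \<not> E x y \<Longrightarrow> y = b" using D(1,9,10) by auto
  qed
  have "\<exists>y. y \<in> unit x \<and> E x y" using D(1,9) by blast
  hence c1: "cc x \<in> unit x \<and> E x (cc x)" unfolding cc_def by (rule someI_ex)
  hence ccd: "cc x = c \<or> cc x = d" using D(1,8) Eirr by auto
  have "\<exists>y. y \<in> unit x \<and> E x y \<and> y \<noteq> cc x" using D(1,7,9,10) ccd by blast
  hence d1: "dd x \<in> unit x \<and> E x (dd x) \<and> dd x \<noteq> cc x" unfolding dd_def by (rule someI_ex)
  hence ddd: "(cc x = c \<and> dd x = d) \<or> (cc x = d \<and> dd x = c)" using D(1,8) Eirr ccd by auto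
  have sy: "E d c" using D(13) Esym by blast
  show "unit x = {x, oth x, cc x, dd x}" "distinct [x, oth x, cc x, dd x]"
    "E x (cc x)" "E x (dd x)" "E (oth x) (cc x)" "E (oth x) (dd x)" "E (cc x) (dd x)"
    "nbrs E (cc x) \<subseteq> unit x" "nbrs E (dd x) \<subseteq> unit x"
    using ddd D(1-7,9-15) ob sy by auto
qed

end

locale cgad = cg V E for V :: "'a set" and E +
  fixes e0 :: 'a
  assumes AD: "\<forall>U\<in>cg.PP V E. is_diamond E U" and e0: "cg.ep V E e0"
begin

definition nxt :: "'a \<Rightarrow> 'a" where "nxt x = oth (ext x)"
definition aa :: "nat \<Rightarrow> 'a" where "aa n = (nxt ^^ n) e0"

lemma ep_nxt: "ep x \<Longrightarrow> ep (nxt x)"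
  unfolding nxt_def using oth_prop(4)[OF AD] ep_ext(1) by blast

lemma aa_Suc: "aa (Suc n) = nxt (aa n)" by (simp add: aa_def)
lemma aa_0: "aa 0 = e0" by (simp add: aa_def)

lemma ep_aa: "ep (aa n)"
  by (induction n) (auto simp: aa_Suc aa_0 e0 ep_nxt)

lemma aaV: "aa n \<in> V" using ep_aa by (simp add: ep_def)

lemma oth_inj: "ep x \<Longrightarrow> ep y \<Longrightarrow> oth x = oth y \<Longrightarrow> x = y"
  using oth_prop(6)[OF AD] by metis
lemma ext_inj: "ep x \<Longrightarrow> ep y \<Longrightarrow> ext x = ext y \<Longrightarrow> x = y"
  using ep_ext(2) by metis
lemma nxt_inj: "ep x \<Longrightarrow> ep y \<Longrightarrow> nxt x = nxt y \<Longrightarrow> x = y"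
  unfolding nxt_def using oth_inj ext_inj ep_ext(1) by blast
lemma oth_nxt: "ep x \<Longrightarrow> oth (nxt x) = ext x"
  unfolding nxt_def using oth_prop(6)[OF AD] ep_ext(1) by blast

lemma cancel: "aa (i + d) = aa i \<Longrightarrow> aa d = aa 0"
proof (induction i)
  case (Suc i)
  have "nxt (aa (i + d)) = nxt (aa i)" using Suc(2) by (simp add: aa_Suc)
  hence "aa (i + d) = aa i" using nxt_inj ep_aa by blast
  thus ?case using Suc(1) by blast
qed simp

lemma ex_period: "\<exists>L>0. aa L = aa 0"
proof -
  have "\<not> inj_on aa {..card V}"
  proof
    assume "inj_on aa {..card V}"
    hence "card (aa ` {..card V}) = Suc (card V)" by (simp add: card_image)
    moreover have "aa ` {..card V} \<subseteq> V" using aaV by blast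
    hence "card (aa ` {..card V}) \<le> card V" using finV card_mono by blast
    ultimately show False by simp
  qed
  then obtain i j where ij: "i \<noteq> j" "aa i = aa j" unfolding inj_on_def by blast
  show ?thesis
  proof (cases "i < j")
    case True
    hence "aa (i + (j - i)) = aa i" using ij by simp
    hence "aa (j - i) = aa 0" by (rule cancel)
    thus ?thesis using True by (intro exI[of _ "j - i"]) simp
  next
    case False
    hence "aa (j + (i - j)) = aa j" using ij by simp
    hence "aa (i - j) = aa 0" by (rule cancel)
    thus ?thesis using False ij(1) by (intro exI[of _ "i - j"]) simp
  qed
qed

definition L :: nat where "L = (LEAST L. 0 < L \<and> aa L = aa 0)"

lemma L: "0 < L" "aa L = aa 0"
  using LeastI_ex[OF ex_period] unfolding L_def by auto

lemma L_min: "0 < m \<Longrightarrow> m < L \<Longrightarrow> aa m \<noteq> aa 0"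
  unfolding L_def using not_less_Least by blast

lemma aa_add: "aa (n + L) = aa n"
proof -
  have "aa (n + L) = (nxt ^^ n) ((nxt ^^ L) e0)" by (simp add: aa_def funpow_add)
  also have "\<dots> = (nxt ^^ n) e0" using L(2) by (simp add: aa_def)
  finally show ?thesis by (simp add: aa_def)
qed

lemma aa_mult: "aa (n + q * L) = aa n"
  by (induction q) (simp, metis aa_add add.assoc add.commute mult_Suc)

lemma aa_mod: "aa n = aa (n mod L)"
  using aa_mult[of "n mod L" "n div L"] by simp

lemma no_rev_d: "aa (i + d) \<noteq> oth (aa i)"
proof (induction d arbitrary: i rule: less_induct)
  case (less d)
  show ?case
  proof (cases d)
    case 0 thus ?thesis using oth_prop(2)[OF AD ep_aa[of i]] by (metis add_0_right)
  next
    case (Suc d1)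
    show ?thesis
    proof (cases d1)
      case 0
      show ?thesis
      proof
        assume "aa (i + d) = oth (aa i)"
        hence "oth (ext (aa i)) = oth (aa i)" using Suc 0 by (simp add: aa_Suc nxt_def)
        hence "ext (aa i) = aa i" using oth_inj ep_ext(1) ep_aa by blast
        thus False using ext_prop(1)[OF ep_aa] Eirr by metis
      qed
    next
      case (Suc d2)
      show ?thesis
      proof
        assume h: "aa (i + d) = oth (aa i)"
        have "aa (i + d) = nxt (aa (Suc i + d2))" using \<open>d = Suc d1\<close> Suc by (simp add: aa_Suc)
        hence "oth (ext (aa (Suc i + d2))) = oth (aa i)" using h by (simp add: nxt_def)
        hence "ext (aa (Suc i + d2)) = aa i" using oth_inj ep_ext(1) ep_aa by blast
        hence "aa (Suc i + d2) = ext (aa i)" using ep_ext(2)[OF ep_aa] by metis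
        also have "\<dots> = oth (aa (Suc i))" using oth_nxt[OF ep_aa] by (simp add: aa_Suc)
        finally show False using less[of d2 "Suc i"] \<open>d = Suc d1\<close> Suc by simp
      qed
    qed
  qed
qed

lemma no_rev: "aa j \<noteq> oth (aa i)"
proof -
  have "aa j = aa (j + i * L)" using aa_mult by simp
  moreover have "i \<le> j + i * L" using L(1) by (simp add: trans_le_add2)
  ultimately have "aa j = aa (i + (j + i * L - i))" by simp
  thus ?thesis using no_rev_d by metis
qed

lemma aa_inj: assumes "i < L" "j < L" "aa i = aa j" shows "i = j"
proof (rule ccontr)
  assume "i \<noteq> j"
  show False
  proof (cases "i < j")
    case True
    hence "aa (i + (j - i)) = aa i" using assms by simp
    hence "aa (j - i) = aa 0" by (rule cancel)
    thus False using L_min[of "j - i"] True assms by simp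
  next
    case False
    hence "aa (j + (i - j)) = aa j" using assms \<open>i \<noteq> j\<close> by simp
    hence "aa (i - j) = aa 0" by (rule cancel)
    thus False using L_min[of "i - j"] False \<open>i \<noteq> j\<close> assms by simp
  qed
qed

lemma unit_inj: assumes "i < L" "j < L" "unit (aa i) = unit (aa j)" shows "i = j"
proof -
  have "aa j \<in> unit (aa i)" using assms(3) unit(2)[OF aaV] by simp
  hence "aa j = aa i \<or> aa j = oth (aa i)" using oth_prop(7)[OF AD ep_aa ep_aa] by blast
  thus ?thesis using no_rev aa_inj assms by metis
qed

lemma cover_aa: assumes "v \<in> V" shows "\<exists>i<L. v \<in> unit (aa i)"
proof -
  let ?M = "{v \<in> V. \<exists>n. v \<in> unit (aa n)}"
  have "e0 \<in> unit (aa 0)" "e0 \<in> V" using unit(2)[OF aaV[of 0]] aaV[of 0] by (auto simp: aa_0)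
  hence e0M: "e0 \<in> ?M" by blast
  have "V \<subseteq> ?M"
  proof (rule closed_all[OF e0M])
    show "e0 \<in> V" using aaV[of 0] by (simp add: aa_0)
    fix x y assume x: "x \<in> ?M" and xy: "E x y"
    have yV: "y \<in> V" using xy EV2 by blast
    obtain n where n: "x \<in> unit (aa n)" using x by blast
    have xV: "x \<in> V" using x by blast
    have ux: "unit x = unit (aa n)" using unit_same[OF aaV n] .
    show "y \<in> ?M"
    proof (cases "y \<in> unit (aa n)")
      case True thus ?thesis using yV by blast
    next
      case False
      hence epx: "ep x" using xV xy ux by (auto simp: ep_def)
      hence "x = aa n \<or> x = oth (aa n)" using oth_prop(7)[OF AD ep_aa] n by blast
      thus ?thesis
      proof
        assume "x = aa n"
        hence "y = ext (aa n)" using ext_prop(3)[OF ep_aa] xy False by blast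
        also have "\<dots> = oth (aa (Suc n))" using oth_nxt[OF ep_aa] by (simp add: aa_Suc)
        finally have "y \<in> unit (aa (Suc n))" using oth_prop(1)[OF AD ep_aa] by simp
        thus ?thesis using yV by blast
      next
        assume xo: "x = oth (aa n)"
        obtain m where m: "n + L = Suc m" using L(1) by (metis add_gr_0 less_iff_Suc_add zero_less_Suc add.commute)
        have "x = oth (aa (Suc m))" using xo aa_add m by metis
        also have "\<dots> = ext (aa m)" using oth_nxt[OF ep_aa] by (simp add: aa_Suc)
        finally have "y = ext (ext (aa m))" using ext_prop(3)[OF epx xy] False ux by simp
        hence "y = aa m" using ep_ext(2)[OF ep_aa] by simp
        thus ?thesis using yV unit(2)[OF aaV] by blast
      qed
    qed
  qed
  then obtain n where "v \<in> unit (aa n)" using assms by blast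
  hence "v \<in> unit (aa (n mod L))" using aa_mod by metis
  thus ?thesis using L(1) by (meson mod_less_divisor)
qed

lemma L2: "2 \<le> L"
proof (rule ccontr)
  assume "\<not> 2 \<le> L"
  hence L1: "L = 1" using L(1) by simp
  have "ext e0 \<in> V" using ext_prop(1)[OF e0] EV2 by blast
  then obtain i where "i < L" "ext e0 \<in> unit (aa i)" using cover_aa by blast
  hence "ext e0 \<in> unit e0" using L1 by (simp add: aa_0)
  thus False using ext_prop(2)[OF e0] by simp
qed

lemma PP_img: "PP = (\<lambda>i. unit (aa i)) ` {..<L}"
proof
  show "PP \<subseteq> (\<lambda>i. unit (aa i)) ` {..<L}"
  proof
    fix U assume U: "U \<in> PP"
    obtain v where v: "v \<in> U" using PP_ne[OF U] by blast
    have vV: "v \<in> V" using v PP_sub[OF U] by blast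
    obtain i where i: "i < L" "v \<in> unit (aa i)" using cover_aa[OF vV] by blast
    have "U = unit (aa i)" using PP_disj[OF U unit(1)[OF aaV] v i(2)] .
    thus "U \<in> (\<lambda>i. unit (aa i)) ` {..<L}" using i by blast
  qed
next
  show "(\<lambda>i. unit (aa i)) ` {..<L} \<subseteq> PP" using unit(1)[OF aaV] by blast
qed

lemma card_PP: "card PP = L"
proof -
  have "inj_on (\<lambda>i. unit (aa i)) {..<L}" unfolding inj_on_def using unit_inj by blast
  thus ?thesis using PP_img by (simp add: card_image)
qed

end

context cgad begin

definition gg :: "nat \<times> nat \<Rightarrow> 'a" where
  "gg p = (case p of (i,j) \<Rightarrow> if j = 0 then aa i else if j = 1 then oth (aa i) else if j = 2 then cc (aa i) else dd (aa i))"

lemma j4: "(j::nat) < 4 \<Longrightarrow> j = 0 \<or> j = 1 \<or> j = 2 \<or> j = 3" by auto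

lemma gg_unit: assumes "j < 4" shows "gg (i,j) \<in> unit (aa i)"
  using cc_prop(1)[OF AD ep_aa[of i]] j4[OF assms] by (auto simp: gg_def)

lemma gg_unit_eq: assumes "j < 4" shows "unit (gg (i,j)) = unit (aa i)"
  using unit_same[OF aaV gg_unit[OF assms]] .

lemma gg_bij: "bij_betw gg (necklace_V L) V"
  unfolding bij_betw_def
proof
  show "inj_on gg (necklace_V L)"
  proof (rule inj_onI)
    fix x y assume x: "x \<in> necklace_V L" and y: "y \<in> necklace_V L" and e: "gg x = gg y"
    obtain i j where ij: "x = (i,j)" "i < L" "j < 4" using x by (auto simp: necklace_V_def)
    obtain i' j' where ij': "y = (i',j')" "i' < L" "j' < 4" using y by (auto simp: necklace_V_def)
    have "unit (aa i) = unit (aa i')" using gg_unit_eq[OF ij(3), of i] gg_unit_eq[OF ij'(3), of i'] e ij ij' by simp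
    hence ii: "i = i'" using unit_inj ij ij' by blast
    have "distinct [aa i, oth (aa i), cc (aa i), dd (aa i)]" using cc_prop(2)[OF AD ep_aa] .
    hence "j = j'" using e ij ij' ii j4[OF ij(3)] j4[OF ij'(3)] by (auto simp: gg_def)
    thus "x = y" using ii ij ij' by simp
  qed
next
  show "gg ` necklace_V L = V"
  proof
    show "gg ` necklace_V L \<subseteq> V" using gg_unit PP_sub unit(1)[OF aaV] by (fastforce simp: necklace_V_def)
  next
    show "V \<subseteq> gg ` necklace_V L"
    proof
      fix v assume v: "v \<in> V"
      obtain i where i: "i < L" "v \<in> unit (aa i)" using cover_aa[OF v] by blast
      hence "v = gg (i,0) \<or> v = gg (i,1) \<or> v = gg (i,2) \<or> v = gg (i,3)"
        using cc_prop(1)[OF AD ep_aa[of i]] by (auto simp: gg_def)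
      moreover have "(i,0) \<in> necklace_V L" "(i,1) \<in> necklace_V L" "(i,2) \<in> necklace_V L" "(i,3) \<in> necklace_V L"
        using i by (auto simp: necklace_V_def)
      ultimately show "v \<in> gg ` necklace_V L" by blast
    qed
  qed
qed

lemma aa_ext: "ext (aa i) = oth (aa (Suc i mod L))"
  using oth_nxt[OF ep_aa[of i]] aa_mod[of "Suc i"] by (simp add: aa_Suc)

lemma same_unit_idx: assumes "i < L" "i' < L" "y \<in> unit (aa i)" "y \<in> unit (aa i')" shows "i = i'"
proof -
  have "unit (aa i) = unit (aa i')" using PP_disj[OF unit(1)[OF aaV] unit(1)[OF aaV] assms(3,4)] .
  thus ?thesis using unit_inj assms by blast
qed

lemma E_a_oth: assumes "i < L" "i' < L" shows "E (aa i) (oth (aa i')) \<longleftrightarrow> i' = Suc i mod L"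
proof
  assume e: "E (aa i) (oth (aa i'))"
  have "oth (aa i') \<notin> unit (aa i)"
  proof
    assume "oth (aa i') \<in> unit (aa i)"
    moreover have "oth (aa i') \<in> unit (aa i')" using oth_prop(1)[OF AD ep_aa] .
    ultimately have "i = i'" using same_unit_idx assms by blast
    thus False using e oth_prop(3)[OF AD ep_aa] by simp
  qed
  hence "oth (aa i') = oth (aa (Suc i mod L))" using ext_prop(3)[OF ep_aa e] aa_ext by simp
  hence "aa i' = aa (Suc i mod L)" using oth_inj ep_aa by blast
  thus "i' = Suc i mod L" using aa_inj assms L(1) by simp
next
  assume "i' = Suc i mod L"
  thus "E (aa i) (oth (aa i'))" using ext_prop(1)[OF ep_aa[of i]] aa_ext by simp
qed

lemma E_a_a: assumes "i < L" "i' < L" shows "\<not> E (aa i) (aa i')"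
proof
  assume e: "E (aa i) (aa i')"
  show False
  proof (cases "aa i' \<in> unit (aa i)")
    case True
    hence "i = i'" using same_unit_idx assms unit(2)[OF aaV] by blast
    thus False using e Eirr by simp
  next
    case False
    hence "aa i' = oth (aa (Suc i mod L))" using ext_prop(3)[OF ep_aa e] aa_ext by simp
    thus False using no_rev by blast
  qed
qed

lemma oth_ext: "\<exists>m. ext (oth (aa i)) = aa m"
proof -
  obtain m where m: "i + L = Suc m" using L(1) by (metis add_gr_0 less_iff_Suc_add zero_less_Suc add.commute)
  have "oth (aa i) = oth (aa (Suc m))" using aa_add m by metis
  also have "\<dots> = ext (aa m)" using oth_nxt[OF ep_aa] by (simp add: aa_Suc)
  finally have "ext (oth (aa i)) = aa m" using ep_ext(2)[OF ep_aa] by simp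
  thus ?thesis by blast
qed

lemma E_o_o: assumes "i < L" "i' < L" shows "\<not> E (oth (aa i)) (oth (aa i'))"
proof
  assume e: "E (oth (aa i)) (oth (aa i'))"
  have ep1: "ep (oth (aa i))" using oth_prop(4)[OF AD ep_aa] .
  show False
  proof (cases "oth (aa i') \<in> unit (aa i)")
    case True
    hence "i = i'" using same_unit_idx assms oth_prop(1)[OF AD ep_aa] by blast
    thus False using e Eirr by simp
  next
    case False
    hence "oth (aa i') = ext (oth (aa i))" using ext_prop(3)[OF ep1 e] oth_prop(5)[OF AD ep_aa] by simp
    thus False using oth_ext no_rev by metis
  qed
qed

lemma E_cen: assumes "j < 4" "2 \<le> j" "E (gg (i,j)) y" shows "y \<in> unit (aa i)"
proof -
  have "j = 2 \<or> j = 3" using assms by auto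
  hence "nbrs E (gg (i,j)) \<subseteq> unit (aa i)" using cc_prop(8,9)[OF AD ep_aa[of i]] by (auto simp: gg_def)
  thus ?thesis using assms(3) by (auto simp: nbrs_def)
qed

lemma gg_E: assumes x: "x \<in> necklace_V L" and y: "y \<in> necklace_V L"
  shows "necklace_E L x y \<longleftrightarrow> E (gg x) (gg y)"
proof -
  obtain i j where ij: "x = (i,j)" "i < L" "j < 4" using x by (auto simp: necklace_V_def)
  obtain i' j' where ij': "y = (i',j')" "i' < L" "j' < 4" using y by (auto simp: necklace_V_def)
  show ?thesis
  proof (cases "i = i'")
    case True
    have sm: "Suc i mod L \<noteq> i" using suc_mod_ne L2 ij by blast
    have N: "necklace_E L (i,j) (i,j') \<longleftrightarrow> j \<noteq> j' \<and> {j,j'} \<noteq> {0,1}"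
      using ij ij' True sm x y by (auto simp: necklace_E_def)
    let ?a = "aa i" and ?b = "oth (aa i)" and ?c = "cc (aa i)" and ?d = "dd (aa i)"
    have D: "distinct [?a, ?b, ?c, ?d]" "E ?a ?c" "E ?a ?d" "E ?b ?c" "E ?b ?d" "E ?c ?d" "\<not> E ?a ?b"
      using cc_prop(2-7)[OF AD ep_aa[of i]] oth_prop(3)[OF AD ep_aa[of i]] by auto
    have S: "E ?c ?a" "E ?d ?a" "E ?c ?b" "E ?d ?b" "E ?d ?c" "\<not> E ?b ?a" using D Esym by blast+
    have G: "gg (i,0) = ?a" "gg (i,1) = ?b" "gg (i,2) = ?c" "gg (i,3) = ?d" by (auto simp: gg_def)
    have "necklace_E L (i,j) (i,j') \<longleftrightarrow> E (gg (i,j)) (gg (i,j'))" unfolding N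
      using j4[OF ij(3)] j4[OF ij'(3)] G D S Eirr by (elim disjE) (simp_all add: doubleton_eq_iff)
    thus ?thesis using ij ij' True by simp
  next
    case False
    have N: "necklace_E L (i,j) (i',j') \<longleftrightarrow> (j = 0 \<and> j' = 1 \<and> i' = Suc i mod L) \<or> (j' = 0 \<and> j = 1 \<and> i = Suc i' mod L)"
      using ij ij' False x y by (auto simp: necklace_E_def)
    have c1: "\<not> E (gg (i,j)) (gg (i',j'))" if "2 \<le> j"
    proof
      assume "E (gg (i,j)) (gg (i',j'))"
      hence "gg (i',j') \<in> unit (aa i)" using E_cen ij that by blast
      thus False using same_unit_idx[OF ij(2) ij'(2) _ gg_unit[OF ij'(3)]] False by blast
    qed
    have c2: "\<not> E (gg (i,j)) (gg (i',j'))" if "2 \<le> j'"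
    proof
      assume "E (gg (i,j)) (gg (i',j'))"
      hence "E (gg (i',j')) (gg (i,j))" using Esym by blast
      hence "gg (i,j) \<in> unit (aa i')" using E_cen ij' that by blast
      thus False using same_unit_idx[OF ij'(2) ij(2) _ gg_unit[OF ij(3)]] False by blast
    qed
    have G: "gg (i,0) = aa i" "gg (i,1) = oth (aa i)" "gg (i',0) = aa i'" "gg (i',1) = oth (aa i')" by (auto simp: gg_def)
    have e01: "E (aa i) (oth (aa i')) \<longleftrightarrow> i' = Suc i mod L" using E_a_oth ij ij' by blast
    have e10: "E (oth (aa i)) (aa i') \<longleftrightarrow> i = Suc i' mod L" using E_a_oth[OF ij'(2) ij(2)] Esym by blast
    have e00: "\<not> E (aa i) (aa i')" using E_a_a ij ij' by blast
    have e11: "\<not> E (oth (aa i)) (oth (aa i'))" using E_o_o ij ij' by blast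
    show ?thesis unfolding ij(1) ij'(1) N
      using j4[OF ij(3)] j4[OF ij'(3)] G e01 e10 e00 e11 c1 c2 by (elim disjE) simp_all
  qed
qed

lemma iso_neck: "graph_iso V E (necklace_V L) (necklace_E L)"
proof -
  define f where "f = inv_into (necklace_V L) gg"
  have fb: "bij_betw f V (necklace_V L)" using bij_betw_inv_into[OF gg_bij] f_def by simp
  have gf: "gg (f x) = x" if "x \<in> V" for x using gg_bij that f_def by (simp add: bij_betw_inv_into_right)
  have fN: "f x \<in> necklace_V L" if "x \<in> V" for x using fb that bij_betwE by blast
  have "\<forall>x\<in>V. \<forall>y\<in>V. E x y \<longleftrightarrow> necklace_E L (f x) (f y)"
    using gg_E fN gf by metis
  thus ?thesis using fb unfolding graph_iso_def by blast
qed

end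

theorem corollary4p5:
  fixes V :: "'a set" and E :: "'a \<Rightarrow> 'a \<Rightarrow> bool"
  assumes "simple_graph V E" and "connected_graph V E" and "claw_free V E" and "cubic V E"
    and "\<not> graph_iso V E K4_V K4_E"
  shows "((\<exists>k\<ge>2. graph_iso V E (necklace_V k) (necklace_E k)) \<longrightarrow> sigma V E 2 3 = num_units V E + 1)
       \<and> ((\<not> (\<exists>k\<ge>2. graph_iso V E (necklace_V k) (necklace_E k))) \<longrightarrow> sigma V E 2 3 = num_units V E)"
proof -
  interpret G: cg V E using assms by unfold_locales
  have nu: "num_units V E = card G.PP" by (rule G.num_units_eq)
  show ?thesis
  proof (cases "\<forall>U\<in>G.PP. is_diamond E U")
    case True
    obtain S where S: "spreading_set V E 2 3 S" "card S = card G.PP + 1" using G.ub_dia[OF True] by blast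
    have sig: "sigma V E 2 3 = card G.PP + 1"
      using G.sigma_eq[OF S] G.lb_dia[OF _ True] by blast
    obtain v where v: "v \<in> V" using G.Vne by blast
    have U: "G.unit v \<in> G.PP" "v \<in> G.unit v" using G.unit[OF v] by auto
    obtain e0 f where ef: "e0 \<in> G.unit v" "E e0 f" "f \<notin> G.unit v"
      using G.ep_ex[OF U(1) True[rule_format, OF U(1)]] by blast
    have e0V: "e0 \<in> V" using ef G.PP_sub[OF U(1)] by blast
    have "G.unit e0 = G.unit v" using G.unit_same[OF v ef(1)] .
    hence "G.ep e0" using e0V ef by (auto simp: G.ep_def)
    then interpret A: cgad V E e0 using True by unfold_locales auto
    have "\<exists>k\<ge>2. graph_iso V E (necklace_V k) (necklace_E k)" using A.iso_neck A.L2 by blast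
    thus ?thesis using sig nu by simp
  next
    case False
    obtain S where S: "spreading_set V E 2 3 S" "card S = card G.PP" using G.ub_tri[OF False] by blast
    have sig: "sigma V E 2 3 = card G.PP"
      using G.sigma_eq[OF S] G.lb by blast
    have "\<not> (\<exists>k\<ge>2. graph_iso V E (necklace_V k) (necklace_E k))" using G.iso_AD False by blast
    thus ?thesis using sig nu by simp
  qed
qed

end
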